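(* Suppose $\mathrm{char}(\mathbb{F})=0$. Then for every commutative unital $\mathbb{F}$-algebra $A$, $$\mathfrak{P}^{\mathrm{cu}}(A)=\ker\big(d:A\to\Omega^1(A)\big)=\mathcal{H}^0_{\mathrm{deR}}(A);$$ equivalently, for every affine scheme $S$ over $\mathbb{F}$, $\pi_0(S)=\mathcal{H}^0_{\mathrm{deR}}(S)$.
   Context: $\mathbb{F}$ is a field. For a commutative unital algebra $A$, $\mathfrak{P}^{\mathrm{cu}}(A)$ is the set of $a\in A$ such that for every commutative unital algebra $C$ and every unit-preserving morphism $\varphi:A\to C[x]$, $\varphi(a)$ is a constant polynomial (lies in $C\subseteq C[x]$); it is a unital subalgebra (the paper defines it via a universal pro-algebra $\mathfrak{M}^{\mathrm{cu}}_{A,\mathbb{F}[x]}$ and proves equality with this set). $d:A\to\Omega^1(A)$ is the universal derivation into the module of Kähler differentials of $A$ over $\mathbb{F}$, and $\mathcal{H}^0_{\mathrm{deR}}(A)$ is the degree-zero cohomology of the algebraic de Rham complex $\Omega(A)$, i.e. $\ker d$. For the affine scheme $S=\mathrm{Spec}(A)$, $\pi_0(S)$ denotes the affine scheme associated with $\mathfrak{P}^{\mathrm{cu}}(A)$ and $\mathcal{H}^0_{\mathrm{deR}}(S)=\mathcal{H}^0_{\mathrm{deR}}(A)$. *)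

theory Defs
  imports "HOL-Algebra.Algebra"
begin

definition char_zero_ring :: "('k, 'm) ring_scheme \<Rightarrow> bool" where
  "char_zero_ring F \<longleftrightarrow> (\<forall>n::nat. n > 0 \<longrightarrow> [n] \<cdot>\<^bsub>F\<^esub> \<one>\<^bsub>F\<^esub> \<noteq> \<zero>\<^bsub>F\<^esub>)"

text \<open>A commutative unital F-algebra is a commutative ring A together with a
  structure (unital ring) homomorphism eta : F -> A.
  The algebras C range over rings whose carrier lives in the type 'c.\<close>
definition Pcu :: "'c itself \<Rightarrow> 'k ring \<Rightarrow> 'a ring \<Rightarrow> ('k \<Rightarrow> 'a) \<Rightarrow> 'a set" where
  "Pcu _ F A eta = {a \<in> carrier A.
     \<forall>(C::'c ring) etaC phi.
        (cring C \<and> etaC \<in> ring_hom F C \<and> phi \<in> ring_hom A (UP C) \<and>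
         (\<forall>c \<in> carrier F. phi (eta c) = monom (UP C) (etaC c) 0))
        \<longrightarrow> (\<exists>c \<in> carrier C. phi a = monom (UP C) c 0)}"

text \<open>Kaehler differentials: Omega^1(A) = (free A-module on symbols delta_a, a in A)
  modulo the A-submodule generated by the relations
  delta(a+b) - delta a - delta b, delta(ab) - a delta b - b delta a,
  delta(eta(l) a) - eta(l) delta a.  The universal derivation is d a = [delta a].
  Elements of the free module are represented as functions 'a => 'a.\<close>

definition kd_delta :: "'a ring \<Rightarrow> 'a \<Rightarrow> ('a \<Rightarrow> 'a)" where
  "kd_delta A a = (\<lambda>x. if x = a then \<one>\<^bsub>A\<^esub> else \<zero>\<^bsub>A\<^esub>)"

definition kd_add :: "'a ring \<Rightarrow> ('a \<Rightarrow> 'a) \<Rightarrow> ('a \<Rightarrow> 'a) \<Rightarrow> ('a \<Rightarrow> 'a)" where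
  "kd_add A f g = (\<lambda>x. f x \<oplus>\<^bsub>A\<^esub> g x)"

definition kd_smult :: "'a ring \<Rightarrow> 'a \<Rightarrow> ('a \<Rightarrow> 'a) \<Rightarrow> ('a \<Rightarrow> 'a)" where
  "kd_smult A c f = (\<lambda>x. c \<otimes>\<^bsub>A\<^esub> f x)"

definition kd_minus :: "'a ring \<Rightarrow> ('a \<Rightarrow> 'a) \<Rightarrow> ('a \<Rightarrow> 'a) \<Rightarrow> ('a \<Rightarrow> 'a)" where
  "kd_minus A f g = (\<lambda>x. f x \<ominus>\<^bsub>A\<^esub> g x)"

definition kd_gens :: "'k ring \<Rightarrow> 'a ring \<Rightarrow> ('k \<Rightarrow> 'a) \<Rightarrow> ('a \<Rightarrow> 'a) set" where
  "kd_gens F A eta =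
     {kd_minus A (kd_minus A (kd_delta A (a \<oplus>\<^bsub>A\<^esub> b)) (kd_delta A a)) (kd_delta A b)
        | a b. a \<in> carrier A \<and> b \<in> carrier A}
   \<union> {kd_minus A (kd_minus A (kd_delta A (a \<otimes>\<^bsub>A\<^esub> b)) (kd_smult A a (kd_delta A b)))
          (kd_smult A b (kd_delta A a))
        | a b. a \<in> carrier A \<and> b \<in> carrier A}
   \<union> {kd_minus A (kd_delta A (eta l \<otimes>\<^bsub>A\<^esub> a)) (kd_smult A (eta l) (kd_delta A a))
        | l a. l \<in> carrier F \<and> a \<in> carrier A}"

inductive_set kd_rels :: "'k ring \<Rightarrow> 'a ring \<Rightarrow> ('k \<Rightarrow> 'a) \<Rightarrow> ('a \<Rightarrow> 'a) set"
  for F :: "'k ring" and A :: "'a ring" and eta :: "'k \<Rightarrow> 'a" where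
  kd_rels_zero: "(\<lambda>x. \<zero>\<^bsub>A\<^esub>) \<in> kd_rels F A eta"
| kd_rels_step: "\<lbrakk> r \<in> kd_gens F A eta; c \<in> carrier A; v \<in> kd_rels F A eta \<rbrakk>
                 \<Longrightarrow> kd_add A (kd_smult A c r) v \<in> kd_rels F A eta"

text \<open>ker (d : A -> Omega^1(A)): d a = 0 iff delta a lies in the relation submodule.\<close>
definition ker_d :: "'k ring \<Rightarrow> 'a ring \<Rightarrow> ('k \<Rightarrow> 'a) \<Rightarrow> 'a set" where
  "ker_d F A eta = {a \<in> carrier A. kd_delta A a \<in> kd_rels F A eta}"

text \<open>Degree-zero de Rham cohomology H^0_dR(A) = ker d (Omega^0(A) = A, first differential d).\<close>
definition deRham_H0 :: "'k ring \<Rightarrow> 'a ring \<Rightarrow> ('k \<Rightarrow> 'a) \<Rightarrow> 'a set" where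
  "deRham_H0 F A eta = ker_d F A eta"

end

theory Submission
  imports Defs
begin

definition nk :: "('c, 'm) ring_scheme \<Rightarrow> nat \<Rightarrow> 'c" where
  "nk R n = add_pow R n \<one>\<^bsub>R\<^esub>"

definition pd :: "('c, 'm) ring_scheme \<Rightarrow> (nat \<Rightarrow> 'c) \<Rightarrow> nat \<Rightarrow> 'c" where
  "pd R p = (\<lambda>n. nk R (Suc n) \<otimes>\<^bsub>R\<^esub> p (Suc n))"

lemma UP_carrier_iff: "p \<in> carrier (UP R) \<longleftrightarrow> p \<in> up R"
  by (simp add: UP_def)

lemma UP_coeffs: "p \<in> carrier (UP R) \<Longrightarrow> p i \<in> carrier R"
  by (auto simp: UP_def)

lemma monom_eq: "a \<in> carrier R \<Longrightarrow> monom (UP R) a n = (\<lambda>i. if i = n then a else \<zero>\<^bsub>R\<^esub>)"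
  by (simp add: UP_def)

lemma zeroP_eq: "\<zero>\<^bsub>UP R\<^esub> = (\<lambda>i. \<zero>\<^bsub>R\<^esub>)"
  by (simp add: UP_def)

lemma addP_eq: "p \<in> carrier (UP R) \<Longrightarrow> q \<in> carrier (UP R) \<Longrightarrow> p \<oplus>\<^bsub>UP R\<^esub> q = (\<lambda>i. p i \<oplus>\<^bsub>R\<^esub> q i)"
  by (simp add: UP_def)

context fixes R :: "('c, 'm) ring_scheme" (structure) assumes R: "cring R"
begin

interpretation R: cring R by (rule R)
interpretation U: UP_cring R "UP R" by (unfold_locales) simp

lemma nk_closed[simp]: "nk R n \<in> carrier R"
  unfolding nk_def by simp

lemma nk_add: "nk R (n + m) = nk R n \<oplus> nk R m"
  unfolding nk_def by (simp add: R.add.nat_pow_mult)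

lemma nk_0[simp]: "nk R 0 = \<zero>"
  unfolding nk_def by simp

lemma pd_closed[simp]: assumes "p \<in> carrier (UP R)" shows "pd R p \<in> carrier (UP R)"
proof -
  from assms have p: "p \<in> up R" by (simp add: UP_def)
  then obtain n where b: "bound \<zero> n p" by auto
  have "bound \<zero> n (pd R p)"
    unfolding bound_def pd_def
  proof (intro allI impI)
    fix m assume "n < m"
    then have "p (Suc m) = \<zero>" using b unfolding bound_def by simp
    then show "nk R (Suc m) \<otimes> p (Suc m) = \<zero>" by simp
  qed
  moreover have "\<forall>i. pd R p i \<in> carrier R" using p unfolding pd_def by (simp add: mem_upD)
  ultimately show ?thesis unfolding UP_carrier_iff by (intro mem_upI) auto
qed

lemma pd_add: assumes "p \<in> carrier (UP R)" "q \<in> carrier (UP R)"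
  shows "pd R (p \<oplus>\<^bsub>UP R\<^esub> q) = pd R p \<oplus>\<^bsub>UP R\<^esub> pd R q"
proof -
  have pc: "\<And>i. p i \<in> carrier R" "\<And>i. q i \<in> carrier R" using assms by (simp_all add: UP_coeffs)
  have "pd R p \<oplus>\<^bsub>UP R\<^esub> pd R q = (\<lambda>i. pd R p i \<oplus> pd R q i)"
    by (rule addP_eq) (use assms in simp_all)
  moreover have "p \<oplus>\<^bsub>UP R\<^esub> q = (\<lambda>i. p i \<oplus> q i)" by (rule addP_eq) (use assms in simp_all)
  ultimately show ?thesis unfolding pd_def
    by (simp add: R.r_distr[OF pc(1) pc(2)])
qed

lemma pd_zero: "pd R \<zero>\<^bsub>UP R\<^esub> = \<zero>\<^bsub>UP R\<^esub>"
  unfolding pd_def zeroP_eq by simp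

lemma pd_monom: assumes a: "a \<in> carrier R"
  shows "pd R (monom (UP R) a n) = monom (UP R) (nk R n \<otimes> a) (n - 1)"
proof (cases n)
  case 0
  then show ?thesis using a by (auto simp: monom_eq pd_def fun_eq_iff zeroP_eq)
next
  case (Suc m)
  then show ?thesis using a by (auto simp: monom_eq pd_def fun_eq_iff)
qed

lemma leib_monom: assumes a: "a \<in> carrier R" and b: "b \<in> carrier R"
  shows "pd R (monom (UP R) a n \<otimes>\<^bsub>UP R\<^esub> monom (UP R) b m) =
     monom (UP R) a n \<otimes>\<^bsub>UP R\<^esub> pd R (monom (UP R) b m) \<oplus>\<^bsub>UP R\<^esub> monom (UP R) b m \<otimes>\<^bsub>UP R\<^esub> pd R (monom (UP R) a n)"
proof -
  have ab: "a \<otimes> b \<in> carrier R" using a b by simp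
  have L: "pd R (monom (UP R) a n \<otimes>\<^bsub>UP R\<^esub> monom (UP R) b m) = monom (UP R) (nk R (n+m) \<otimes> (a \<otimes> b)) (n + m - 1)"
    unfolding U.monom_mult[OF a b, symmetric] by (rule pd_monom[OF ab])
  have r1: "monom (UP R) a n \<otimes>\<^bsub>UP R\<^esub> pd R (monom (UP R) b m) = monom (UP R) (a \<otimes> (nk R m \<otimes> b)) (n + (m - 1))"
    unfolding pd_monom[OF b] by (rule U.monom_mult[symmetric]) (use a b in simp_all)
  have r2: "monom (UP R) b m \<otimes>\<^bsub>UP R\<^esub> pd R (monom (UP R) a n) = monom (UP R) (b \<otimes> (nk R n \<otimes> a)) (m + (n - 1))"
    unfolding pd_monom[OF a] by (rule U.monom_mult[symmetric]) (use a b in simp_all)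
  show ?thesis
  proof (cases "n = 0")
    case True
    have "b \<otimes> (nk R n \<otimes> a) = \<zero>" using True a b by simp
    then have "monom (UP R) b m \<otimes>\<^bsub>UP R\<^esub> pd R (monom (UP R) a n) = \<zero>\<^bsub>UP R\<^esub>"
      unfolding r2 by simp
    moreover have "a \<otimes> (nk R m \<otimes> b) = nk R (n+m) \<otimes> (a \<otimes> b)" using True a b by (simp add: R.m_lcomm)
    ultimately show ?thesis using L r1 True a b by simp
  next
    case nz: False
    show ?thesis
    proof (cases "m = 0")
      case True
      have "a \<otimes> (nk R m \<otimes> b) = \<zero>" using True a b by simp
      then have "monom (UP R) a n \<otimes>\<^bsub>UP R\<^esub> pd R (monom (UP R) b m) = \<zero>\<^bsub>UP R\<^esub>"
        unfolding r1 by simp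
      moreover have "b \<otimes> (nk R n \<otimes> a) = nk R (n+m) \<otimes> (a \<otimes> b)" using True a b by (simp add: R.m_lcomm R.m_comm)
      moreover have "m + (n - 1) = n + m - 1" using True by simp
      ultimately show ?thesis using L r2 True a b by simp
    next
      case False
      with nz have e1: "n + (m - 1) = n + m - 1" "m + (n - 1) = n + m - 1" by auto
      have "monom (UP R) a n \<otimes>\<^bsub>UP R\<^esub> pd R (monom (UP R) b m) \<oplus>\<^bsub>UP R\<^esub> monom (UP R) b m \<otimes>\<^bsub>UP R\<^esub> pd R (monom (UP R) a n)
        = monom (UP R) (a \<otimes> (nk R m \<otimes> b) \<oplus> b \<otimes> (nk R n \<otimes> a)) (n + m - 1)"
        unfolding r1 r2 e1 by (rule U.monom_add[symmetric]) (use a b in simp_all)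
      also have "a \<otimes> (nk R m \<otimes> b) \<oplus> b \<otimes> (nk R n \<otimes> a) = nk R (n+m) \<otimes> (a \<otimes> b)"
        unfolding nk_add using a b by (simp add: R.r_distr R.l_distr R.m_ac R.add.m_comm)
      finally show ?thesis using L by simp
    qed
  qed
qed


definition LB :: "(nat \<Rightarrow> 'c) \<Rightarrow> (nat \<Rightarrow> 'c) \<Rightarrow> bool" where
  "LB p q \<longleftrightarrow> pd R (p \<otimes>\<^bsub>UP R\<^esub> q) = p \<otimes>\<^bsub>UP R\<^esub> pd R q \<oplus>\<^bsub>UP R\<^esub> q \<otimes>\<^bsub>UP R\<^esub> pd R p"

lemma LB_sym: "p \<in> carrier (UP R) \<Longrightarrow> q \<in> carrier (UP R) \<Longrightarrow> LB p q \<Longrightarrow> LB q p"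
  unfolding LB_def by (simp add: U.P.m_comm U.P.a_comm)

lemma LB_zero: "q \<in> carrier (UP R) \<Longrightarrow> LB \<zero>\<^bsub>UP R\<^esub> q"
  unfolding LB_def by (simp add: pd_zero)

lemma LB_add: assumes p1: "p1 \<in> carrier (UP R)" and p2: "p2 \<in> carrier (UP R)" and q: "q \<in> carrier (UP R)"
  and "LB p1 q" "LB p2 q" shows "LB (p1 \<oplus>\<^bsub>UP R\<^esub> p2) q"
proof -
  have "pd R ((p1 \<oplus>\<^bsub>UP R\<^esub> p2) \<otimes>\<^bsub>UP R\<^esub> q) = pd R (p1 \<otimes>\<^bsub>UP R\<^esub> q) \<oplus>\<^bsub>UP R\<^esub> pd R (p2 \<otimes>\<^bsub>UP R\<^esub> q)"
    using p1 p2 q by (simp add: U.P.l_distr pd_add)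
  also have "\<dots> = (p1 \<otimes>\<^bsub>UP R\<^esub> pd R q \<oplus>\<^bsub>UP R\<^esub> q \<otimes>\<^bsub>UP R\<^esub> pd R p1) \<oplus>\<^bsub>UP R\<^esub> (p2 \<otimes>\<^bsub>UP R\<^esub> pd R q \<oplus>\<^bsub>UP R\<^esub> q \<otimes>\<^bsub>UP R\<^esub> pd R p2)"
    using assms(4,5) unfolding LB_def by simp
  also have "\<dots> = (p1 \<oplus>\<^bsub>UP R\<^esub> p2) \<otimes>\<^bsub>UP R\<^esub> pd R q \<oplus>\<^bsub>UP R\<^esub> q \<otimes>\<^bsub>UP R\<^esub> pd R (p1 \<oplus>\<^bsub>UP R\<^esub> p2)"
    using p1 p2 q by (simp add: U.P.l_distr U.P.r_distr pd_add U.P.a_ac)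
  finally show ?thesis unfolding LB_def .
qed

lemma LB_finsum: assumes fin: "finite S" and f: "f \<in> S \<rightarrow> carrier (UP R)" and q: "q \<in> carrier (UP R)"
  and lb: "\<And>i. i \<in> S \<Longrightarrow> LB (f i) q"
  shows "LB (finsum (UP R) f S) q"
  using fin f lb
proof (induction S rule: finite_induct)
  case empty
  then show ?case using q by (simp add: LB_zero)
next
  case (insert x F)
  have fx: "f x \<in> carrier (UP R)" and fF: "f \<in> F \<rightarrow> carrier (UP R)" using insert.prems by auto
  have "finsum (UP R) f (insert x F) = f x \<oplus>\<^bsub>UP R\<^esub> finsum (UP R) f F"
    using insert.hyps fx fF by (simp add: U.P.finsum_insert)
  moreover have "LB (f x \<oplus>\<^bsub>UP R\<^esub> finsum (UP R) f F) q"
    by (rule LB_add) (use fx fF q insert in auto)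
  ultimately show ?case by simp
qed

lemma leibniz: assumes p: "p \<in> carrier (UP R)" and q: "q \<in> carrier (UP R)"
  shows "pd R (p \<otimes>\<^bsub>UP R\<^esub> q) = p \<otimes>\<^bsub>UP R\<^esub> pd R q \<oplus>\<^bsub>UP R\<^esub> q \<otimes>\<^bsub>UP R\<^esub> pd R p"
proof -
  have mono: "LB (monom (UP R) a n) q" if a: "a \<in> carrier R" for a n
  proof -
    have "LB (finsum (UP R) (\<lambda>i. monom (UP R) (coeff (UP R) q i) i) {..deg R q}) (monom (UP R) a n)"
      by (rule LB_finsum) (use a q in \<open>auto simp: LB_def leib_monom\<close>)
    then have "LB q (monom (UP R) a n)" using U.up_repr[OF q] by simp
    then show ?thesis using LB_sym[OF q _] a by simp
  qed
  have "LB (finsum (UP R) (\<lambda>i. monom (UP R) (coeff (UP R) p i) i) {..deg R p}) q"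
    by (rule LB_finsum) (use p q mono in auto)
  then have "LB p q" using U.up_repr[OF p] by simp
  then show ?thesis unfolding LB_def .
qed

end

locale kd_setup =
  fixes F :: "'k ring" and A :: "'a ring" and eta :: "'k \<Rightarrow> 'a"
    and B :: "('b, 'm) ring_scheme" and c0 :: "'a \<Rightarrow> 'b" and D :: "'a \<Rightarrow> 'b"
  assumes A: "cring A" and B: "cring B" and eta: "eta \<in> ring_hom F A"
    and c0: "c0 \<in> ring_hom A B"
    and Dc: "\<And>a. a \<in> carrier A \<Longrightarrow> D a \<in> carrier B"
    and D_add: "\<And>a b. a \<in> carrier A \<Longrightarrow> b \<in> carrier A \<Longrightarrow> D (a \<oplus>\<^bsub>A\<^esub> b) = D a \<oplus>\<^bsub>B\<^esub> D b"
    and D_mult: "\<And>a b. a \<in> carrier A \<Longrightarrow> b \<in> carrier A \<Longrightarrow>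
        D (a \<otimes>\<^bsub>A\<^esub> b) = c0 a \<otimes>\<^bsub>B\<^esub> D b \<oplus>\<^bsub>B\<^esub> c0 b \<otimes>\<^bsub>B\<^esub> D a"
    and D_eta: "\<And>l a. l \<in> carrier F \<Longrightarrow> a \<in> carrier A \<Longrightarrow>
        D (eta l \<otimes>\<^bsub>A\<^esub> a) = c0 (eta l) \<otimes>\<^bsub>B\<^esub> D a"
begin

interpretation A: cring A by (rule A)
interpretation B: cring B by (rule B)
interpretation H: ring_hom_ring A B c0 by unfold_locales (rule c0)

definition Lam :: "'a set \<Rightarrow> ('a \<Rightarrow> 'a) \<Rightarrow> 'b" where
  "Lam T v = finsum B (\<lambda>x. c0 (v x) \<otimes>\<^bsub>B\<^esub> D x) T"

definition vals :: "('a \<Rightarrow> 'a) \<Rightarrow> bool" where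
  "vals v \<longleftrightarrow> (\<forall>x. v x \<in> carrier A)"

definition good :: "('a \<Rightarrow> 'a) \<Rightarrow> bool" where
  "good v \<longleftrightarrow> vals v \<and> (\<exists>S. finite S \<and> S \<subseteq> carrier A \<and> (\<forall>x. x \<notin> S \<longrightarrow> v x = \<zero>\<^bsub>A\<^esub>)
      \<and> (\<forall>T. finite T \<longrightarrow> S \<subseteq> T \<longrightarrow> T \<subseteq> carrier A \<longrightarrow> Lam T v = \<zero>\<^bsub>B\<^esub>))"

lemma term_closed: "vals v \<Longrightarrow> T \<subseteq> carrier A \<Longrightarrow> (\<lambda>x. c0 (v x) \<otimes>\<^bsub>B\<^esub> D x) \<in> T \<rightarrow> carrier B"
  unfolding vals_def using Dc by (auto intro!: B.m_closed)

lemma Lam_closed: "vals v \<Longrightarrow> T \<subseteq> carrier A \<Longrightarrow> Lam T v \<in> carrier B"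
  unfolding Lam_def by (rule B.finsum_closed) (rule term_closed)

lemma vals_add: "vals f \<Longrightarrow> vals g \<Longrightarrow> vals (kd_add A f g)"
  unfolding vals_def kd_add_def by auto
lemma vals_smult: "c \<in> carrier A \<Longrightarrow> vals f \<Longrightarrow> vals (kd_smult A c f)"
  unfolding vals_def kd_smult_def by auto
lemma vals_minus: "vals f \<Longrightarrow> vals g \<Longrightarrow> vals (kd_minus A f g)"
  unfolding vals_def kd_minus_def by auto
lemma vals_delta: "vals (kd_delta A a)"
  unfolding vals_def kd_delta_def by auto
lemma vals_zero: "vals (\<lambda>x. \<zero>\<^bsub>A\<^esub>)"
  unfolding vals_def by auto

lemma Lam_add: assumes "finite T" "T \<subseteq> carrier A" "vals f" "vals g"
  shows "Lam T (kd_add A f g) = Lam T f \<oplus>\<^bsub>B\<^esub> Lam T g"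
proof -
  have fx: "\<And>x. f x \<in> carrier A" "\<And>x. g x \<in> carrier A" using assms unfolding vals_def by auto
  have "Lam T (kd_add A f g) = finsum B (\<lambda>x. c0 (f x) \<otimes>\<^bsub>B\<^esub> D x \<oplus>\<^bsub>B\<^esub> c0 (g x) \<otimes>\<^bsub>B\<^esub> D x) T"
    unfolding Lam_def kd_add_def
    by (rule B.finsum_cong') (use assms fx Dc in \<open>auto simp: B.l_distr\<close>)
  also have "\<dots> = Lam T f \<oplus>\<^bsub>B\<^esub> Lam T g"
    unfolding Lam_def by (rule B.finsum_addf) (use term_closed assms in auto)
  finally show ?thesis .
qed

lemma Lam_smult: assumes "finite T" "T \<subseteq> carrier A" "vals f" "c \<in> carrier A"
  shows "Lam T (kd_smult A c f) = c0 c \<otimes>\<^bsub>B\<^esub> Lam T f"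
proof -
  have fx: "\<And>x. f x \<in> carrier A" using assms unfolding vals_def by auto
  have "Lam T (kd_smult A c f) = finsum B (\<lambda>x. c0 c \<otimes>\<^bsub>B\<^esub> (c0 (f x) \<otimes>\<^bsub>B\<^esub> D x)) T"
    unfolding Lam_def kd_smult_def
    by (rule B.finsum_cong') (use assms fx Dc in \<open>auto simp: B.m_assoc\<close>)
  also have "\<dots> = c0 c \<otimes>\<^bsub>B\<^esub> Lam T f"
    unfolding Lam_def by (rule B.finsum_rdistr[symmetric]) (use term_closed assms in auto)
  finally show ?thesis .
qed

lemma kd_minus_eq: "vals g \<Longrightarrow> kd_minus A f g = kd_add A f (kd_smult A (\<ominus>\<^bsub>A\<^esub> \<one>\<^bsub>A\<^esub>) g)"
  unfolding kd_minus_def kd_add_def kd_smult_def vals_def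
  by (auto simp: fun_eq_iff A.minus_eq A.l_minus)

lemma Lam_minus: assumes "finite T" "T \<subseteq> carrier A" "vals f" "vals g"
  shows "Lam T (kd_minus A f g) = Lam T f \<ominus>\<^bsub>B\<^esub> Lam T g"
proof -
  have "Lam T (kd_minus A f g) = Lam T f \<oplus>\<^bsub>B\<^esub> c0 (\<ominus>\<^bsub>A\<^esub> \<one>\<^bsub>A\<^esub>) \<otimes>\<^bsub>B\<^esub> Lam T g"
    using assms by (simp add: kd_minus_eq Lam_add Lam_smult vals_smult)
  also have "\<dots> = Lam T f \<ominus>\<^bsub>B\<^esub> Lam T g"
    using assms Lam_closed by (simp add: B.minus_eq B.l_minus)
  finally show ?thesis .
qed

lemma Lam_delta: assumes "finite T" "T \<subseteq> carrier A" "a \<in> T"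
  shows "Lam T (kd_delta A a) = D a"
proof -
  have "Lam T (kd_delta A a) = finsum B (\<lambda>x. if a = x then D x else \<zero>\<^bsub>B\<^esub>) T"
    unfolding Lam_def kd_delta_def
    by (rule B.finsum_cong') (use assms Dc in auto)
  also have "\<dots> = D a"
    by (rule B.finsum_singleton) (use assms Dc in auto)
  finally show ?thesis .
qed

lemma neg3: "x \<in> carrier B \<Longrightarrow> y \<in> carrier B \<Longrightarrow> x \<oplus>\<^bsub>B\<^esub> (y \<oplus>\<^bsub>B\<^esub> (\<ominus>\<^bsub>B\<^esub> x \<oplus>\<^bsub>B\<^esub> \<ominus>\<^bsub>B\<^esub> y)) = \<zero>\<^bsub>B\<^esub>"
proof -
  assume x: "x \<in> carrier B" and y: "y \<in> carrier B"
  have "x \<oplus>\<^bsub>B\<^esub> (y \<oplus>\<^bsub>B\<^esub> (\<ominus>\<^bsub>B\<^esub> x \<oplus>\<^bsub>B\<^esub> \<ominus>\<^bsub>B\<^esub> y)) = (x \<oplus>\<^bsub>B\<^esub> y) \<oplus>\<^bsub>B\<^esub> \<ominus>\<^bsub>B\<^esub> (x \<oplus>\<^bsub>B\<^esub> y)"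
    using x y by (simp add: B.minus_add B.a_assoc)
  also have "\<dots> = \<zero>\<^bsub>B\<^esub>" using x y by (simp add: B.r_neg)
  finally show ?thesis .
qed

lemma Lam_zero: assumes T: "T \<subseteq> carrier A" shows "Lam T (\<lambda>x. \<zero>\<^bsub>A\<^esub>) = \<zero>\<^bsub>B\<^esub>"
proof -
  have "\<And>x. x \<in> T \<Longrightarrow> c0 \<zero>\<^bsub>A\<^esub> \<otimes>\<^bsub>B\<^esub> D x = \<zero>\<^bsub>B\<^esub>"
  proof -
    fix x assume "x \<in> T"
    then have "D x \<in> carrier B" using T Dc by blast
    then show "c0 \<zero>\<^bsub>A\<^esub> \<otimes>\<^bsub>B\<^esub> D x = \<zero>\<^bsub>B\<^esub>" by simp
  qed
  then have "Lam T (\<lambda>x. \<zero>\<^bsub>A\<^esub>) = finsum B (\<lambda>x. \<zero>\<^bsub>B\<^esub>) T"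
    unfolding Lam_def by (intro B.finsum_cong') auto
  then show ?thesis by simp
qed

lemma delta_out: "x \<noteq> a \<Longrightarrow> kd_delta A a x = \<zero>\<^bsub>A\<^esub>"
  unfolding kd_delta_def by simp

lemma good_gens: assumes "r \<in> kd_gens F A eta" shows "good r"
  using assms unfolding kd_gens_def
proof (elim UnE CollectE exE conjE)
  fix a b assume r: "r = kd_minus A (kd_minus A (kd_delta A (a \<oplus>\<^bsub>A\<^esub> b)) (kd_delta A a)) (kd_delta A b)"
    and a: "a \<in> carrier A" and b: "b \<in> carrier A"
  show "good r" unfolding good_def
  proof (intro conjI exI allI impI)
    show "vals r" unfolding r by (intro vals_minus vals_delta)
    show "finite {a \<oplus>\<^bsub>A\<^esub> b, a, b}" by simp
    show "{a \<oplus>\<^bsub>A\<^esub> b, a, b} \<subseteq> carrier A" using a b by simp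
    fix x assume "x \<notin> {a \<oplus>\<^bsub>A\<^esub> b, a, b}"
    then show "r x = \<zero>\<^bsub>A\<^esub>" unfolding r kd_minus_def by (simp add: delta_out)
  next
    fix T assume T: "finite T" "{a \<oplus>\<^bsub>A\<^esub> b, a, b} \<subseteq> T" "T \<subseteq> carrier A"
    have "Lam T r = D (a \<oplus>\<^bsub>A\<^esub> b) \<ominus>\<^bsub>B\<^esub> D a \<ominus>\<^bsub>B\<^esub> D b"
      unfolding r using T by (simp add: Lam_minus vals_minus vals_delta Lam_delta)
    also have "\<dots> = \<zero>\<^bsub>B\<^esub>" using a b Dc by (simp add: D_add B.minus_eq B.a_assoc neg3)
    finally show "Lam T r = \<zero>\<^bsub>B\<^esub>" .
  qed
next
  fix a b assume r: "r = kd_minus A (kd_minus A (kd_delta A (a \<otimes>\<^bsub>A\<^esub> b)) (kd_smult A a (kd_delta A b))) (kd_smult A b (kd_delta A a))"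
    and a: "a \<in> carrier A" and b: "b \<in> carrier A"
  show "good r" unfolding good_def
  proof (intro conjI exI allI impI)
    show "vals r" unfolding r using a b by (intro vals_minus vals_delta vals_smult)
    show "finite {a \<otimes>\<^bsub>A\<^esub> b, a, b}" by simp
    show "{a \<otimes>\<^bsub>A\<^esub> b, a, b} \<subseteq> carrier A" using a b by simp
    fix x assume "x \<notin> {a \<otimes>\<^bsub>A\<^esub> b, a, b}"
    then show "r x = \<zero>\<^bsub>A\<^esub>" unfolding r kd_minus_def kd_smult_def using a b by (simp add: delta_out)
  next
    fix T assume T: "finite T" "{a \<otimes>\<^bsub>A\<^esub> b, a, b} \<subseteq> T" "T \<subseteq> carrier A"
    have "Lam T r = D (a \<otimes>\<^bsub>A\<^esub> b) \<ominus>\<^bsub>B\<^esub> c0 a \<otimes>\<^bsub>B\<^esub> D b \<ominus>\<^bsub>B\<^esub> c0 b \<otimes>\<^bsub>B\<^esub> D a"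
      unfolding r using T a b by (simp add: Lam_minus Lam_smult vals_minus vals_smult vals_delta Lam_delta)
    also have "\<dots> = \<zero>\<^bsub>B\<^esub>" using a b Dc by (simp add: D_mult B.minus_eq B.a_assoc neg3)
    finally show "Lam T r = \<zero>\<^bsub>B\<^esub>" .
  qed
next
  fix l a assume r: "r = kd_minus A (kd_delta A (eta l \<otimes>\<^bsub>A\<^esub> a)) (kd_smult A (eta l) (kd_delta A a))"
    and l: "l \<in> carrier F" and a: "a \<in> carrier A"
  have el: "eta l \<in> carrier A" using eta l by (rule ring_hom_closed)
  show "good r" unfolding good_def
  proof (intro conjI exI allI impI)
    show "vals r" unfolding r using el by (intro vals_minus vals_delta vals_smult)
    show "finite {eta l \<otimes>\<^bsub>A\<^esub> a, a}" by simp
    show "{eta l \<otimes>\<^bsub>A\<^esub> a, a} \<subseteq> carrier A" using a el by simp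
    fix x assume "x \<notin> {eta l \<otimes>\<^bsub>A\<^esub> a, a}"
    then show "r x = \<zero>\<^bsub>A\<^esub>" unfolding r kd_minus_def kd_smult_def using el by (simp add: delta_out)
  next
    fix T assume T: "finite T" "{eta l \<otimes>\<^bsub>A\<^esub> a, a} \<subseteq> T" "T \<subseteq> carrier A"
    have "Lam T r = D (eta l \<otimes>\<^bsub>A\<^esub> a) \<ominus>\<^bsub>B\<^esub> c0 (eta l) \<otimes>\<^bsub>B\<^esub> D a"
      unfolding r using T a el by (simp add: Lam_minus Lam_smult vals_smult vals_delta Lam_delta)
    also have "\<dots> = \<zero>\<^bsub>B\<^esub>" using a el l Dc by (simp add: D_eta B.r_neg B.minus_eq)
    finally show "Lam T r = \<zero>\<^bsub>B\<^esub>" .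
  qed
qed

lemma good_step: assumes r: "good r" and v: "good v" and c: "c \<in> carrier A"
  shows "good (kd_add A (kd_smult A c r) v)"
proof -
  obtain S1 where S1: "finite S1" "S1 \<subseteq> carrier A" "\<forall>x. x \<notin> S1 \<longrightarrow> r x = \<zero>\<^bsub>A\<^esub>"
    "\<forall>T. finite T \<longrightarrow> S1 \<subseteq> T \<longrightarrow> T \<subseteq> carrier A \<longrightarrow> Lam T r = \<zero>\<^bsub>B\<^esub>" and vr: "vals r"
    using r unfolding good_def by blast
  obtain S2 where S2: "finite S2" "S2 \<subseteq> carrier A" "\<forall>x. x \<notin> S2 \<longrightarrow> v x = \<zero>\<^bsub>A\<^esub>"
    "\<forall>T. finite T \<longrightarrow> S2 \<subseteq> T \<longrightarrow> T \<subseteq> carrier A \<longrightarrow> Lam T v = \<zero>\<^bsub>B\<^esub>" and vv: "vals v"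
    using v unfolding good_def by blast
  show ?thesis unfolding good_def
  proof (intro conjI exI allI impI)
    show "vals (kd_add A (kd_smult A c r) v)" using vr vv c by (intro vals_add vals_smult)
    show "finite (S1 \<union> S2)" "S1 \<union> S2 \<subseteq> carrier A" using S1 S2 by auto
    fix x assume "x \<notin> S1 \<union> S2"
    then show "kd_add A (kd_smult A c r) v x = \<zero>\<^bsub>A\<^esub>"
      using S1 S2 c unfolding kd_add_def kd_smult_def by simp
  next
    fix T assume T: "finite T" "S1 \<union> S2 \<subseteq> T" "T \<subseteq> carrier A"
    have "Lam T (kd_add A (kd_smult A c r) v) = c0 c \<otimes>\<^bsub>B\<^esub> Lam T r \<oplus>\<^bsub>B\<^esub> Lam T v"
      using T vr vv c by (simp add: Lam_add Lam_smult vals_smult)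
    also have "\<dots> = \<zero>\<^bsub>B\<^esub>" using S1 S2 T c by simp
    finally show "Lam T (kd_add A (kd_smult A c r) v) = \<zero>\<^bsub>B\<^esub>" .
  qed
qed

lemma good_rels: "v \<in> kd_rels F A eta \<Longrightarrow> good v"
proof (induction rule: kd_rels.induct)
  case kd_rels_zero
  show ?case unfolding good_def by (intro conjI vals_zero exI[of _ "{}"]) (auto simp: Lam_zero vals_zero)
next
  case (kd_rels_step r c v)
  then show ?case using good_gens good_step by blast
qed

theorem ker_D: assumes "a \<in> carrier A" "kd_delta A a \<in> kd_rels F A eta" shows "D a = \<zero>\<^bsub>B\<^esub>"
proof -
  obtain S where S: "finite S" "S \<subseteq> carrier A"
    "\<forall>T. finite T \<longrightarrow> S \<subseteq> T \<longrightarrow> T \<subseteq> carrier A \<longrightarrow> Lam T (kd_delta A a) = \<zero>\<^bsub>B\<^esub>"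
    using good_rels[OF assms(2)] unfolding good_def by blast
  have "Lam (insert a S) (kd_delta A a) = \<zero>\<^bsub>B\<^esub>" using S assms by auto
  moreover have "Lam (insert a S) (kd_delta A a) = D a" using S assms by (intro Lam_delta) auto
  ultimately show ?thesis by simp
qed

end


lemma nk_hom: assumes F: "cring F" and C: "cring C" and h: "h \<in> ring_hom F C"
  shows "h (nk F n) = nk C n"
proof (induction n)
  case 0
  then show ?case using F C h by (simp add: ring_hom_zero cring.axioms(1) nk_0)
next
  case (Suc n)
  interpret F: cring F by fact
  interpret C: cring C by fact
  have "nk F (Suc n) = nk F n \<oplus>\<^bsub>F\<^esub> \<one>\<^bsub>F\<^esub>" unfolding nk_def by (simp add: F.add.nat_pow_Suc)
  moreover have "nk C (Suc n) = nk C n \<oplus>\<^bsub>C\<^esub> \<one>\<^bsub>C\<^esub>" unfolding nk_def by (simp add: C.add.nat_pow_Suc)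
  ultimately show ?case using Suc h F C by (simp add: ring_hom_add ring_hom_one nk_closed)
qed

lemma char_cancel: assumes F: "field F" and cz: "char_zero_ring F" and C: "cring C"
  and h: "h \<in> ring_hom F C" and c: "c \<in> carrier C" and e: "nk C (Suc n) \<otimes>\<^bsub>C\<^esub> c = \<zero>\<^bsub>C\<^esub>"
  shows "c = \<zero>\<^bsub>C\<^esub>"
proof -
  interpret F: field F by fact
  interpret C: cring C by fact
  let ?k = "nk F (Suc n)"
  have nz: "?k \<noteq> \<zero>\<^bsub>F\<^esub>" using cz unfolding char_zero_ring_def nk_def by auto
  have nc: "?k \<in> carrier F" by (rule nk_closed) (rule F.is_cring)
  then have u: "?k \<in> Units F" using nz F.field_Units by blast
  have uc: "inv\<^bsub>F\<^esub> ?k \<in> carrier F" using u by (rule F.Units_inv_closed)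
  have hk: "h ?k = nk C (Suc n)" by (rule nk_hom[OF F.is_cring C.is_cring h])
  have hu: "h (inv\<^bsub>F\<^esub> ?k) \<in> carrier C" using h uc by (rule ring_hom_closed)
  have nkc: "nk C (Suc n) \<in> carrier C" by (rule nk_closed) (rule C.is_cring)
  have "h (inv\<^bsub>F\<^esub> ?k) \<otimes>\<^bsub>C\<^esub> nk C (Suc n) = h (inv\<^bsub>F\<^esub> ?k \<otimes>\<^bsub>F\<^esub> ?k)"
    unfolding hk[symmetric] using ring_hom_mult[OF h uc nc] by simp
  also have "\<dots> = \<one>\<^bsub>C\<^esub>" using F.Units_l_inv[OF u] ring_hom_one[OF h] by simp
  finally have one: "h (inv\<^bsub>F\<^esub> ?k) \<otimes>\<^bsub>C\<^esub> nk C (Suc n) = \<one>\<^bsub>C\<^esub>" .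
  have "c = (h (inv\<^bsub>F\<^esub> ?k) \<otimes>\<^bsub>C\<^esub> nk C (Suc n)) \<otimes>\<^bsub>C\<^esub> c" unfolding one using c by simp
  also have "\<dots> = h (inv\<^bsub>F\<^esub> ?k) \<otimes>\<^bsub>C\<^esub> (nk C (Suc n) \<otimes>\<^bsub>C\<^esub> c)"
    using hu nkc c by (rule C.m_assoc)
  also have "\<dots> = \<zero>\<^bsub>C\<^esub>" unfolding e using hu by simp
  finally show ?thesis .
qed

lemma pd_const_zero: assumes C: "cring C" and c: "c \<in> carrier C"
  shows "pd C (monom (UP C) c 0) = \<zero>\<^bsub>UP C\<^esub>"
proof -
  interpret C: cring C by fact
  interpret U: UP_cring C "UP C" by unfold_locales simp
  show ?thesis using pd_monom[OF C c, of 0] c by (simp add: nk_0[OF C] U.monom_zero)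
qed

lemma pd_zero_const: assumes C: "cring C" and p: "p \<in> carrier (UP C)" and z: "pd C p = \<zero>\<^bsub>UP C\<^esub>"
  and canc: "\<And>n c. c \<in> carrier C \<Longrightarrow> nk C (Suc n) \<otimes>\<^bsub>C\<^esub> c = \<zero>\<^bsub>C\<^esub> \<Longrightarrow> c = \<zero>\<^bsub>C\<^esub>"
  shows "p = monom (UP C) (p 0) 0"
proof -
  have pc: "\<And>i. p i \<in> carrier C" using p by (rule UP_coeffs)
  have z2: "pd C p = (\<lambda>i. \<zero>\<^bsub>C\<^esub>)" using z unfolding zeroP_eq .
  have pi: "p i = (if i = 0 then p 0 else \<zero>\<^bsub>C\<^esub>)" for i
  proof (cases i)
    case (Suc n)
    have "pd C p n = \<zero>\<^bsub>C\<^esub>" using z2 by (rule fun_cong)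
    then have "nk C (Suc n) \<otimes>\<^bsub>C\<^esub> p (Suc n) = \<zero>\<^bsub>C\<^esub>" unfolding pd_def .
    then have "p (Suc n) = \<zero>\<^bsub>C\<^esub>" by (rule canc[OF pc])
    then show ?thesis using Suc by simp
  next
    case 0
    then show ?thesis by simp
  qed
  show ?thesis unfolding monom_eq[OF pc[of 0]]
  proof
    fix i show "p i = (if i = 0 then p 0 else \<zero>\<^bsub>C\<^esub>)" by (rule pi)
  qed
qed

theorem ker_sub_Pcu:
  assumes F: "field F" and cz: "char_zero_ring F" and A: "cring A" and eta: "eta \<in> ring_hom F A"
  shows "ker_d F A eta \<subseteq> Pcu TYPE('c) F A eta"
proof
  fix a assume "a \<in> ker_d F A eta"
  then have a: "a \<in> carrier A" and da: "kd_delta A a \<in> kd_rels F A eta" unfolding ker_d_def by auto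
  show "a \<in> Pcu TYPE('c) F A eta" unfolding Pcu_def
  proof (intro CollectI conjI allI impI a)
    fix C :: "'c ring" and etaC phi
    assume H: "cring C \<and> etaC \<in> ring_hom F C \<and> phi \<in> ring_hom A (UP C) \<and>
         (\<forall>c\<in>carrier F. phi (eta c) = monom (UP C) (etaC c) 0)"
    then have C: "cring C" and etaC: "etaC \<in> ring_hom F C" and phi: "phi \<in> ring_hom A (UP C)"
      and phieta: "\<And>c. c \<in> carrier F \<Longrightarrow> phi (eta c) = monom (UP C) (etaC c) 0" by auto
    interpret C: cring C by fact
    interpret U: UP_cring C "UP C" by unfold_locales simp
    interpret Ac: cring A by fact
    have phic: "\<And>x. x \<in> carrier A \<Longrightarrow> phi x \<in> carrier (UP C)" using phi by (rule ring_hom_closed)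
    interpret K: kd_setup F A eta "UP C" phi "\<lambda>x. pd C (phi x)"
    proof (rule kd_setup.intro)
      show "cring A" by fact
      show "cring (UP C)" by (rule U.UP_cring)
      show "eta \<in> ring_hom F A" by fact
      show "phi \<in> ring_hom A (UP C)" by fact
      show "\<And>a. a \<in> carrier A \<Longrightarrow> pd C (phi a) \<in> carrier (UP C)" using phic pd_closed[OF C] by blast
      show "\<And>a b. a \<in> carrier A \<Longrightarrow> b \<in> carrier A \<Longrightarrow>
          pd C (phi (a \<oplus>\<^bsub>A\<^esub> b)) = pd C (phi a) \<oplus>\<^bsub>UP C\<^esub> pd C (phi b)"
        using phi phic by (simp add: ring_hom_add pd_add[OF C])
      show "\<And>a b. a \<in> carrier A \<Longrightarrow> b \<in> carrier A \<Longrightarrow>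
          pd C (phi (a \<otimes>\<^bsub>A\<^esub> b)) = phi a \<otimes>\<^bsub>UP C\<^esub> pd C (phi b) \<oplus>\<^bsub>UP C\<^esub> phi b \<otimes>\<^bsub>UP C\<^esub> pd C (phi a)"
        using phi phic by (simp add: ring_hom_mult leibniz[OF C])
      fix l x assume l: "l \<in> carrier F" and x: "x \<in> carrier A"
      have el: "eta l \<in> carrier A" using eta l by (rule ring_hom_closed)
      have ec: "etaC l \<in> carrier C" using etaC l by (rule ring_hom_closed)
      have "pd C (phi (eta l \<otimes>\<^bsub>A\<^esub> x)) = phi (eta l) \<otimes>\<^bsub>UP C\<^esub> pd C (phi x) \<oplus>\<^bsub>UP C\<^esub> phi x \<otimes>\<^bsub>UP C\<^esub> pd C (phi (eta l))"
        using phi phic el x by (simp add: ring_hom_mult leibniz[OF C])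
      also have "pd C (phi (eta l)) = \<zero>\<^bsub>UP C\<^esub>" using phieta[OF l] pd_const_zero[OF C ec] by simp
      finally show "pd C (phi (eta l \<otimes>\<^bsub>A\<^esub> x)) = phi (eta l) \<otimes>\<^bsub>UP C\<^esub> pd C (phi x)"
        using phic el x pd_closed[OF C] by simp
    qed
    have "pd C (phi a) = \<zero>\<^bsub>UP C\<^esub>" by (rule K.ker_D[OF a da])
    then have "phi a = monom (UP C) (phi a 0) 0"
      by (rule pd_zero_const[OF C phic[OF a]]) (use char_cancel[OF F cz C etaC] in blast)
    moreover have "phi a 0 \<in> carrier C" using phic[OF a] by (rule UP_coeffs)
    ultimately show "\<exists>c\<in>carrier C. phi a = monom (UP C) c 0" by blast
  qed
qed

definition FS :: "'a ring \<Rightarrow> ('a \<Rightarrow> 'a) set" where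
  "FS A = {f. (\<forall>x. f x \<in> carrier A) \<and> finite {x. f x \<noteq> \<zero>\<^bsub>A\<^esub>} \<and> {x. f x \<noteq> \<zero>\<^bsub>A\<^esub>} \<subseteq> carrier A}"

definition SZ :: "'a ring \<Rightarrow> ('a \<times> ('a \<Rightarrow> 'a)) ring" where
  "SZ A = \<lparr>carrier = carrier A \<times> FS A,
     monoid.mult = (\<lambda>x y. (fst x \<otimes>\<^bsub>A\<^esub> fst y, kd_add A (kd_smult A (fst x) (snd y)) (kd_smult A (fst y) (snd x)))),
     one = (\<one>\<^bsub>A\<^esub>, \<lambda>_. \<zero>\<^bsub>A\<^esub>), ring.zero = (\<zero>\<^bsub>A\<^esub>, \<lambda>_. \<zero>\<^bsub>A\<^esub>),
     ring.add = (\<lambda>x y. (fst x \<oplus>\<^bsub>A\<^esub> fst y, kd_add A (snd x) (snd y)))\<rparr>"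

lemma SZ_carrier: "carrier (SZ A) = carrier A \<times> FS A" by (simp add: SZ_def)
lemma SZ_mult: "x \<otimes>\<^bsub>SZ A\<^esub> y = (fst x \<otimes>\<^bsub>A\<^esub> fst y, kd_add A (kd_smult A (fst x) (snd y)) (kd_smult A (fst y) (snd x)))"
  by (simp add: SZ_def)
lemma SZ_add: "x \<oplus>\<^bsub>SZ A\<^esub> y = (fst x \<oplus>\<^bsub>A\<^esub> fst y, kd_add A (snd x) (snd y))"
  by (simp add: SZ_def)
lemma SZ_one: "\<one>\<^bsub>SZ A\<^esub> = (\<one>\<^bsub>A\<^esub>, \<lambda>_. \<zero>\<^bsub>A\<^esub>)" by (simp add: SZ_def)
lemma SZ_zero: "\<zero>\<^bsub>SZ A\<^esub> = (\<zero>\<^bsub>A\<^esub>, \<lambda>_. \<zero>\<^bsub>A\<^esub>)" by (simp add: SZ_def)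

lemma FS_vals: "f \<in> FS A \<Longrightarrow> f x \<in> carrier A"
  unfolding FS_def by auto

context fixes A :: "'a ring" (structure) assumes A: "cring A"
begin

interpretation A: cring A by (rule A)

lemma FS_zero: "(\<lambda>_. \<zero>) \<in> FS A"
  unfolding FS_def by auto

lemma FS_add: assumes "f \<in> FS A" "g \<in> FS A" shows "kd_add A f g \<in> FS A"
proof -
  have s: "{x. kd_add A f g x \<noteq> \<zero>} \<subseteq> {x. f x \<noteq> \<zero>} \<union> {x. g x \<noteq> \<zero>}"
    unfolding kd_add_def using assms by (auto simp: FS_vals)
  have fin: "finite {x. kd_add A f g x \<noteq> \<zero>}" by (rule finite_subset[OF s]) (use assms in \<open>auto simp: FS_def\<close>)
  have sub: "{x. kd_add A f g x \<noteq> \<zero>} \<subseteq> carrier A" using s assms unfolding FS_def by blast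
  have "\<forall>x. kd_add A f g x \<in> carrier A" using assms by (simp add: kd_add_def FS_vals)
  then show ?thesis using fin sub unfolding FS_def by blast
qed

lemma FS_smult: assumes "c \<in> carrier A" "f \<in> FS A" shows "kd_smult A c f \<in> FS A"
proof -
  have s: "{x. kd_smult A c f x \<noteq> \<zero>} \<subseteq> {x. f x \<noteq> \<zero>}"
    unfolding kd_smult_def using assms by (auto simp: FS_vals)
  have fin: "finite {x. kd_smult A c f x \<noteq> \<zero>}" by (rule finite_subset[OF s]) (use assms in \<open>auto simp: FS_def\<close>)
  have sub: "{x. kd_smult A c f x \<noteq> \<zero>} \<subseteq> carrier A" using s assms unfolding FS_def by blast
  have "\<forall>x. kd_smult A c f x \<in> carrier A" using assms by (simp add: kd_smult_def FS_vals)
  then show ?thesis using fin sub unfolding FS_def by blast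
qed

lemma FS_neg: assumes "f \<in> FS A" shows "(\<lambda>x. \<ominus> f x) \<in> FS A"
proof -
  have s: "{x. \<ominus> f x \<noteq> \<zero>} \<subseteq> {x. f x \<noteq> \<zero>}"
    using assms by (auto simp: FS_vals)
  show ?thesis using assms unfolding FS_def
    by (intro CollectI conjI allI) (auto intro: finite_subset[OF s] order.trans[OF s])
qed

lemma FS_delta: assumes "a \<in> carrier A" shows "kd_delta A a \<in> FS A"
proof -
  have s: "{x. kd_delta A a x \<noteq> \<zero>} \<subseteq> {a}" unfolding kd_delta_def by auto
  show ?thesis using assms unfolding FS_def
    by (intro CollectI conjI allI) (auto simp: kd_delta_def intro: finite_subset[OF s])
qed

lemma SZ_cring: "cring (SZ A)"
proof (rule cringI)
  show "abelian_group (SZ A)"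
  proof (rule abelian_groupI)
    fix x y z assume x: "x \<in> carrier (SZ A)" and y: "y \<in> carrier (SZ A)" and z: "z \<in> carrier (SZ A)"
    have xv: "\<And>t. snd x t \<in> carrier A" and yv: "\<And>t. snd y t \<in> carrier A" and zv: "\<And>t. snd z t \<in> carrier A"
      using x y z by (auto simp: SZ_carrier FS_vals)
    have xf: "fst x \<in> carrier A" and yf: "fst y \<in> carrier A" and zf: "fst z \<in> carrier A"
      using x y z by (auto simp: SZ_carrier)
    show "x \<oplus>\<^bsub>SZ A\<^esub> y \<in> carrier (SZ A)" using x y by (auto simp: SZ_carrier SZ_add FS_add)
    show "x \<oplus>\<^bsub>SZ A\<^esub> y \<oplus>\<^bsub>SZ A\<^esub> z = x \<oplus>\<^bsub>SZ A\<^esub> (y \<oplus>\<^bsub>SZ A\<^esub> z)"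
      using xv yv zv xf yf zf by (simp add: SZ_add kd_add_def A.a_assoc)
    show "x \<oplus>\<^bsub>SZ A\<^esub> y = y \<oplus>\<^bsub>SZ A\<^esub> x"
      using xv yv xf yf by (simp add: SZ_add kd_add_def A.a_comm)
  next
    show "\<zero>\<^bsub>SZ A\<^esub> \<in> carrier (SZ A)" by (simp add: SZ_carrier SZ_zero FS_zero)
  next
    fix x assume x: "x \<in> carrier (SZ A)"
    have xv: "\<And>t. snd x t \<in> carrier A" and xf: "fst x \<in> carrier A"
      using x by (auto simp: SZ_carrier FS_vals)
    show "\<zero>\<^bsub>SZ A\<^esub> \<oplus>\<^bsub>SZ A\<^esub> x = x"
      using xv xf by (simp add: SZ_add SZ_zero kd_add_def)
    show "\<exists>y\<in>carrier (SZ A). y \<oplus>\<^bsub>SZ A\<^esub> x = \<zero>\<^bsub>SZ A\<^esub>"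
    proof (intro bexI)
      show "(\<ominus> fst x, \<lambda>t. \<ominus> snd x t) \<oplus>\<^bsub>SZ A\<^esub> x = \<zero>\<^bsub>SZ A\<^esub>"
        using xv xf by (simp add: SZ_add SZ_zero kd_add_def A.l_neg)
      show "(\<ominus> fst x, \<lambda>t. \<ominus> snd x t) \<in> carrier (SZ A)"
        using x by (auto simp: SZ_carrier FS_neg)
    qed
  qed
next
  show "comm_monoid (SZ A)"
  proof (rule comm_monoidI)
    fix x y z assume x: "x \<in> carrier (SZ A)" and y: "y \<in> carrier (SZ A)" and z: "z \<in> carrier (SZ A)"
    have xv: "\<And>t. snd x t \<in> carrier A" and yv: "\<And>t. snd y t \<in> carrier A" and zv: "\<And>t. snd z t \<in> carrier A"
      using x y z by (auto simp: SZ_carrier FS_vals)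
    have xf: "fst x \<in> carrier A" and yf: "fst y \<in> carrier A" and zf: "fst z \<in> carrier A"
      using x y z by (auto simp: SZ_carrier)
    show "x \<otimes>\<^bsub>SZ A\<^esub> y \<in> carrier (SZ A)" using x y by (auto simp: SZ_carrier SZ_mult FS_add FS_smult)
    show "x \<otimes>\<^bsub>SZ A\<^esub> y \<otimes>\<^bsub>SZ A\<^esub> z = x \<otimes>\<^bsub>SZ A\<^esub> (y \<otimes>\<^bsub>SZ A\<^esub> z)"
      using xv yv zv xf yf zf by (simp add: SZ_mult kd_add_def kd_smult_def A.r_distr A.m_ac A.a_ac)
    show "x \<otimes>\<^bsub>SZ A\<^esub> y = y \<otimes>\<^bsub>SZ A\<^esub> x"
      using xv yv xf yf by (simp add: SZ_mult kd_add_def kd_smult_def A.m_comm A.a_comm)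
  next
    show "\<one>\<^bsub>SZ A\<^esub> \<in> carrier (SZ A)" by (simp add: SZ_carrier SZ_one FS_zero)
  next
    fix x assume x: "x \<in> carrier (SZ A)"
    have xv: "\<And>t. snd x t \<in> carrier A" and xf: "fst x \<in> carrier A"
      using x by (auto simp: SZ_carrier FS_vals)
    show "\<one>\<^bsub>SZ A\<^esub> \<otimes>\<^bsub>SZ A\<^esub> x = x"
      using xv xf by (simp add: SZ_mult SZ_one kd_add_def kd_smult_def)
  qed
next
  fix x y z assume x: "x \<in> carrier (SZ A)" and y: "y \<in> carrier (SZ A)" and z: "z \<in> carrier (SZ A)"
  have xv: "\<And>t. snd x t \<in> carrier A" and yv: "\<And>t. snd y t \<in> carrier A" and zv: "\<And>t. snd z t \<in> carrier A"
    using x y z by (auto simp: SZ_carrier FS_vals)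
  have xf: "fst x \<in> carrier A" and yf: "fst y \<in> carrier A" and zf: "fst z \<in> carrier A"
    using x y z by (auto simp: SZ_carrier)
  show "(x \<oplus>\<^bsub>SZ A\<^esub> y) \<otimes>\<^bsub>SZ A\<^esub> z = x \<otimes>\<^bsub>SZ A\<^esub> z \<oplus>\<^bsub>SZ A\<^esub> y \<otimes>\<^bsub>SZ A\<^esub> z"
    using xv yv zv xf yf zf by (simp add: SZ_mult SZ_add kd_add_def kd_smult_def A.l_distr A.r_distr A.a_ac)
qed


lemma FS_minus: assumes "f \<in> FS A" "g \<in> FS A" shows "kd_minus A f g \<in> FS A"
proof -
  have "kd_minus A f g = kd_add A f (\<lambda>x. \<ominus> g x)"
    unfolding kd_minus_def kd_add_def by (simp add: A.minus_eq)
  then show ?thesis using FS_add FS_neg assms by simp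
qed

lemma FS_gens: assumes r: "r \<in> kd_gens F A eta" and eta: "eta \<in> ring_hom F A" shows "r \<in> FS A"
  using r unfolding kd_gens_def
proof (elim UnE CollectE exE conjE)
  fix a b assume "r = kd_minus A (kd_minus A (kd_delta A (a \<oplus> b)) (kd_delta A a)) (kd_delta A b)"
    "a \<in> carrier A" "b \<in> carrier A"
  then show ?thesis by (simp add: FS_minus FS_delta)
next
  fix a b assume "r = kd_minus A (kd_minus A (kd_delta A (a \<otimes> b)) (kd_smult A a (kd_delta A b))) (kd_smult A b (kd_delta A a))"
    "a \<in> carrier A" "b \<in> carrier A"
  then show ?thesis by (simp add: FS_minus FS_delta FS_smult)
next
  fix l a assume "r = kd_minus A (kd_delta A (eta l \<otimes> a)) (kd_smult A (eta l) (kd_delta A a))"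
    "l \<in> carrier F" "a \<in> carrier A"
  moreover have "eta l \<in> carrier A" using eta \<open>l \<in> carrier F\<close> by (rule ring_hom_closed)
  ultimately show ?thesis by (simp add: FS_minus FS_delta FS_smult)
qed

lemma rels_FS: assumes eta: "eta \<in> ring_hom F A" shows "v \<in> kd_rels F A eta \<Longrightarrow> v \<in> FS A"
proof (induction rule: kd_rels.induct)
  case kd_rels_zero
  then show ?case by (rule FS_zero)
next
  case (kd_rels_step r c v)
  then show ?case using FS_gens[OF _ eta] by (intro FS_add FS_smult) auto
qed

lemma rels_add: assumes eta: "eta \<in> ring_hom F A"
  shows "v \<in> kd_rels F A eta \<Longrightarrow> w \<in> kd_rels F A eta \<Longrightarrow> kd_add A v w \<in> kd_rels F A eta"
proof (induction rule: kd_rels.induct)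
  case kd_rels_zero
  have "kd_add A (\<lambda>x. \<zero>) w = w" using rels_FS[OF eta kd_rels_zero.prems]
    by (simp add: kd_add_def FS_vals fun_eq_iff)
  then show ?case using kd_rels_zero by simp
next
  case (kd_rels_step r c v)
  have rf: "r \<in> FS A" using FS_gens[OF kd_rels_step.hyps(1) eta] .
  have vf: "v \<in> FS A" using rels_FS[OF eta kd_rels_step.hyps(3)] .
  have wf: "w \<in> FS A" using rels_FS[OF eta kd_rels_step.prems] .
  have "kd_add A (kd_add A (kd_smult A c r) v) w = kd_add A (kd_smult A c r) (kd_add A v w)"
    using rf vf wf kd_rels_step.hyps(2) by (simp add: kd_add_def kd_smult_def FS_vals fun_eq_iff A.a_assoc)
  then show ?case using kd_rels_step by (simp add: kd_rels.kd_rels_step)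
qed

lemma rels_smult: assumes eta: "eta \<in> ring_hom F A" and c: "c \<in> carrier A"
  shows "v \<in> kd_rels F A eta \<Longrightarrow> kd_smult A c v \<in> kd_rels F A eta"
proof (induction rule: kd_rels.induct)
  case kd_rels_zero
  have "kd_smult A c (\<lambda>x. \<zero>) = (\<lambda>x. \<zero>)" using c by (simp add: kd_smult_def)
  then show ?case by (simp add: kd_rels.kd_rels_zero)
next
  case (kd_rels_step r d v)
  have rf: "r \<in> FS A" using FS_gens[OF kd_rels_step.hyps(1) eta] .
  have vf: "v \<in> FS A" using rels_FS[OF eta kd_rels_step.hyps(3)] .
  have "kd_smult A c (kd_add A (kd_smult A d r) v) = kd_add A (kd_smult A (c \<otimes> d) r) (kd_smult A c v)"
    using rf vf kd_rels_step.hyps(2) c by (simp add: kd_add_def kd_smult_def FS_vals fun_eq_iff A.r_distr A.m_assoc)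
  then show ?case using kd_rels_step c by (simp add: kd_rels.kd_rels_step)
qed

lemma rels_gen: assumes eta: "eta \<in> ring_hom F A" and r: "r \<in> kd_gens F A eta"
  shows "r \<in> kd_rels F A eta"
proof -
  have rf: "r \<in> FS A" using FS_gens[OF r eta] .
  have "kd_add A (kd_smult A \<one> r) (\<lambda>x. \<zero>) \<in> kd_rels F A eta"
    using r by (intro kd_rels.kd_rels_step kd_rels.kd_rels_zero) auto
  moreover have "kd_add A (kd_smult A \<one> r) (\<lambda>x. \<zero>) = r"
    using rf by (simp add: kd_add_def kd_smult_def FS_vals fun_eq_iff)
  ultimately show ?thesis by simp
qed

lemma rels_neg: assumes eta: "eta \<in> ring_hom F A" and v: "v \<in> kd_rels F A eta"
  shows "(\<lambda>x. \<ominus> v x) \<in> kd_rels F A eta"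
proof -
  have "kd_smult A (\<ominus> \<one>) v = (\<lambda>x. \<ominus> v x)"
    using rels_FS[OF eta v] by (simp add: kd_smult_def FS_vals fun_eq_iff A.l_minus)
  then show ?thesis using rels_smult[OF eta _ v, of "\<ominus> \<one>"] by simp
qed

definition II :: "'k ring \<Rightarrow> ('k \<Rightarrow> 'a) \<Rightarrow> ('a \<times> ('a \<Rightarrow> 'a)) set" where
  "II F eta = Pair \<zero> ` kd_rels F A eta"

lemma II_ideal: assumes eta: "eta \<in> ring_hom F A" shows "ideal (II F eta) (SZ A)"
proof -
  interpret S: cring "SZ A" by (rule SZ_cring)
  have sub: "II F eta \<subseteq> carrier (SZ A)"
    unfolding II_def using rels_FS[OF eta] by (auto simp: SZ_carrier)
  have lc: "x \<otimes>\<^bsub>SZ A\<^esub> a \<in> II F eta" if a: "a \<in> II F eta" and x: "x \<in> carrier (SZ A)" for a x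
  proof -
    obtain r where r: "r \<in> kd_rels F A eta" and ar: "a = (\<zero>, r)" using a unfolding II_def by auto
    have xv: "\<And>t. snd x t \<in> carrier A" and xf: "fst x \<in> carrier A"
      using x by (auto simp: SZ_carrier FS_vals)
    have rv: "\<And>t. r t \<in> carrier A" using rels_FS[OF eta r] by (simp add: FS_vals)
    have "x \<otimes>\<^bsub>SZ A\<^esub> a = (\<zero>, kd_smult A (fst x) r)"
      unfolding ar SZ_mult using xv xf rv by (simp add: kd_add_def kd_smult_def fun_eq_iff)
    then show ?thesis unfolding II_def using rels_smult[OF eta xf r] by auto
  qed
  show ?thesis
  proof (rule idealI)
    show "ring (SZ A)" by (rule S.ring_axioms)
    show "subgroup (II F eta) (add_monoid (SZ A))"
    proof (rule S.add.subgroupI)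
      show "II F eta \<subseteq> carrier (SZ A)" by (rule sub)
      show "II F eta \<noteq> {}" unfolding II_def using kd_rels.kd_rels_zero by auto
    next
      fix a assume a: "a \<in> II F eta"
      obtain r where r: "r \<in> kd_rels F A eta" and ar: "a = (\<zero>, r)" using a unfolding II_def by auto
      have rv: "\<And>t. r t \<in> carrier A" using rels_FS[OF eta r] by (simp add: FS_vals)
      have "\<ominus>\<^bsub>SZ A\<^esub> a = (\<zero>, \<lambda>t. \<ominus> r t)"
      proof (rule S.minus_equality)
        show "(\<zero>, \<lambda>t. \<ominus> r t) \<oplus>\<^bsub>SZ A\<^esub> a = \<zero>\<^bsub>SZ A\<^esub>"
          unfolding ar SZ_add SZ_zero using rv by (simp add: kd_add_def fun_eq_iff A.l_neg)
        show "a \<in> carrier (SZ A)" using a sub by auto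
        show "(\<zero>, \<lambda>t. \<ominus> r t) \<in> carrier (SZ A)"
          using rels_FS[OF eta rels_neg[OF eta r]] by (simp add: SZ_carrier)
      qed
      then show "\<ominus>\<^bsub>SZ A\<^esub> a \<in> II F eta" unfolding II_def using rels_neg[OF eta r] by auto
    next
      fix a b assume a: "a \<in> II F eta" and b: "b \<in> II F eta"
      obtain r where r: "r \<in> kd_rels F A eta" and ar: "a = (\<zero>, r)" using a unfolding II_def by auto
      obtain w where w: "w \<in> kd_rels F A eta" and bw: "b = (\<zero>, w)" using b unfolding II_def by auto
      have "a \<oplus>\<^bsub>SZ A\<^esub> b = (\<zero>, kd_add A r w)" unfolding ar bw SZ_add by simp
      then show "a \<oplus>\<^bsub>SZ A\<^esub> b \<in> II F eta" unfolding II_def using rels_add[OF eta r w] by auto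
    qed
    show "\<And>a x. a \<in> II F eta \<Longrightarrow> x \<in> carrier (SZ A) \<Longrightarrow> x \<otimes>\<^bsub>SZ A\<^esub> a \<in> II F eta" by (rule lc)
    fix a x assume a: "a \<in> II F eta" and x: "x \<in> carrier (SZ A)"
    have ac: "a \<in> carrier (SZ A)" using a sub by blast
    have "a \<otimes>\<^bsub>SZ A\<^esub> x = x \<otimes>\<^bsub>SZ A\<^esub> a" using ac x by (rule S.m_comm)
    then show "a \<otimes>\<^bsub>SZ A\<^esub> x \<in> II F eta" using lc[OF a x] by simp
  qed
qed

end

definition transp :: "('q, 'm) ring_scheme \<Rightarrow> ('q \<Rightarrow> 'b) \<Rightarrow> 'b ring" where
  "transp Q g = \<lparr>carrier = g ` carrier Q,
     monoid.mult = (\<lambda>x y. g (inv_into (carrier Q) g x \<otimes>\<^bsub>Q\<^esub> inv_into (carrier Q) g y)),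
     one = g \<one>\<^bsub>Q\<^esub>, ring.zero = g \<zero>\<^bsub>Q\<^esub>,
     ring.add = (\<lambda>x y. g (inv_into (carrier Q) g x \<oplus>\<^bsub>Q\<^esub> inv_into (carrier Q) g y))\<rparr>"

lemma transp_cring:
  assumes Q: "cring Q" and g: "inj_on g (carrier Q)"
  shows "cring (transp Q g)" and "g \<in> ring_hom Q (transp Q g)"
proof -
  interpret Q: cring Q by fact
  have iv: "\<And>x. x \<in> carrier Q \<Longrightarrow> inv_into (carrier Q) g (g x) = x" using g by (rule inv_into_f_f)
  show hom: "g \<in> ring_hom Q (transp Q g)"
    by (rule ring_hom_memI) (auto simp: transp_def iv)
  have "g \<in> ring_iso Q (transp Q g)"
    unfolding ring_iso_def using hom g by (auto simp: bij_betw_def transp_def)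
  then have "cring ((transp Q g)\<lparr>zero := g \<zero>\<^bsub>Q\<^esub>\<rparr>)" by (rule Q.ring_iso_imp_img_cring)
  moreover have "(transp Q g)\<lparr>zero := g \<zero>\<^bsub>Q\<^esub>\<rparr> = transp Q g" by (simp add: transp_def)
  ultimately show "cring (transp Q g)" by simp
qed

lemma transp_carrier: "carrier (transp Q g) = g ` carrier Q" by (simp add: transp_def)
lemma transp_zero: "\<zero>\<^bsub>transp Q g\<^esub> = g \<zero>\<^bsub>Q\<^esub>" by (simp add: transp_def)

lemma infinite_square_Fpow:
  assumes infX: "infinite W"
  shows "lepoll (W \<times> Fpow (W \<times> W)) W"
proof -
  have sq: "eqpoll (W \<times> W) W" using card_of_Times_same_infinite[OF infX] by (simp add: eqpoll_iff_card_of_ordIso)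
  have infsq: "infinite (W \<times> W)" using infX by (auto simp: finite_cartesian_product_iff)
  have f: "eqpoll (Fpow (W \<times> W)) W" using eqpoll_trans[OF eqpoll_Fpow[OF infsq] sq] .
  have "eqpoll (W \<times> Fpow (W \<times> W)) (W \<times> W)" by (rule times_eqpoll_cong[OF eqpoll_refl f])
  then have "eqpoll (W \<times> Fpow (W \<times> W)) W" using sq by (rule eqpoll_trans)
  then show ?thesis by (rule eqpoll_imp_lepoll)
qed

lemma quot_rep_inj:
  assumes I: "ideal I R"
  shows "inj_on (\<lambda>XX. SOME x. x \<in> XX) (carrier (R Quot I))"
    and "\<And>XX. XX \<in> carrier (R Quot I) \<Longrightarrow> (SOME x. x \<in> XX) \<in> carrier R"
proof -
  interpret I: ideal I R by fact
  have cq: "\<And>XX. XX \<in> carrier (R Quot I) \<Longrightarrow> \<exists>x\<in>carrier R. XX = I +>\<^bsub>R\<^esub> x"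
    unfolding FactRing_def A_RCOSETS_def RCOSETS_def a_r_coset_def by auto
  have mem: "\<And>XX. XX \<in> carrier (R Quot I) \<Longrightarrow> (SOME x. x \<in> XX) \<in> XX"
  proof -
    fix XX assume "XX \<in> carrier (R Quot I)"
    then obtain x where x: "x \<in> carrier R" "XX = I +>\<^bsub>R\<^esub> x" using cq by blast
    then have "x \<in> XX" using I.a_rcos_self by simp
    then show "(SOME x. x \<in> XX) \<in> XX" by (rule someI)
  qed
  show "\<And>XX. XX \<in> carrier (R Quot I) \<Longrightarrow> (SOME x. x \<in> XX) \<in> carrier R"
  proof -
    fix XX assume XX: "XX \<in> carrier (R Quot I)"
    then obtain x where x: "x \<in> carrier R" "XX = I +>\<^bsub>R\<^esub> x" using cq by blast
    have "XX \<subseteq> carrier R" unfolding x(2) by (rule I.a_r_coset_subset_G[OF I.a_subset x(1)])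
    then show "(SOME x. x \<in> XX) \<in> carrier R" using mem[OF XX] by blast
  qed
  show "inj_on (\<lambda>XX. SOME x. x \<in> XX) (carrier (R Quot I))"
  proof (rule inj_onI)
    fix XX Y assume XX: "XX \<in> carrier (R Quot I)" and Y: "Y \<in> carrier (R Quot I)"
      and e: "(SOME x. x \<in> XX) = (SOME x. x \<in> Y)"
    obtain x where x: "x \<in> carrier R" "XX = I +>\<^bsub>R\<^esub> x" using cq XX by blast
    obtain y where y: "y \<in> carrier R" "Y = I +>\<^bsub>R\<^esub> y" using cq Y by blast
    let ?z = "SOME x. x \<in> XX"
    have zX: "?z \<in> XX" using mem[OF XX] .
    have zY: "?z \<in> Y" using mem[OF Y] e by simp
    have "XX = I +>\<^bsub>R\<^esub> ?z" using zX x I.a_repr_independence' by simp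
    moreover have "Y = I +>\<^bsub>R\<^esub> ?z" using zY y I.a_repr_independence' by simp
    ultimately show "XX = Y" by simp
  qed
qed

lemma dual_hom:
  fixes A :: "('a, 'm) ring_scheme" and S :: "('s, 'n) ring_scheme"
  assumes A: "cring A" and S: "cring S" and u0: "u0 \<in> ring_hom A S"
    and u1c: "\<And>a. a \<in> carrier A \<Longrightarrow> u1 a \<in> carrier S"
    and u1_add: "\<And>a b. a \<in> carrier A \<Longrightarrow> b \<in> carrier A \<Longrightarrow> u1 (a \<oplus>\<^bsub>A\<^esub> b) = u1 a \<oplus>\<^bsub>S\<^esub> u1 b"
    and u1_mult: "\<And>a b. a \<in> carrier A \<Longrightarrow> b \<in> carrier A \<Longrightarrow>
        u1 (a \<otimes>\<^bsub>A\<^esub> b) = u0 a \<otimes>\<^bsub>S\<^esub> u1 b \<oplus>\<^bsub>S\<^esub> u0 b \<otimes>\<^bsub>S\<^esub> u1 a"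
    and u1_sq: "\<And>a b. a \<in> carrier A \<Longrightarrow> b \<in> carrier A \<Longrightarrow> u1 a \<otimes>\<^bsub>S\<^esub> u1 b = \<zero>\<^bsub>S\<^esub>"
  shows "(\<lambda>a. monom (UP S) (u0 a) 0 \<oplus>\<^bsub>UP S\<^esub> monom (UP S) (u1 a) 1) \<in> ring_hom A (UP S)"
proof -
  interpret A: cring A by fact
  interpret S: cring S by fact
  interpret U: UP_cring S "UP S" by unfold_locales simp
  have u0c: "\<And>a. a \<in> carrier A \<Longrightarrow> u0 a \<in> carrier S" using u0 by (rule ring_hom_closed)
  have u1one: "u1 \<one>\<^bsub>A\<^esub> = \<zero>\<^bsub>S\<^esub>"
  proof -
    have "u1 \<one>\<^bsub>A\<^esub> = u1 (\<one>\<^bsub>A\<^esub> \<otimes>\<^bsub>A\<^esub> \<one>\<^bsub>A\<^esub>)" by simp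
    also have "\<dots> = u1 \<one>\<^bsub>A\<^esub> \<oplus>\<^bsub>S\<^esub> u1 \<one>\<^bsub>A\<^esub>"
      using u1_mult[of "\<one>\<^bsub>A\<^esub>" "\<one>\<^bsub>A\<^esub>"] u1c[of "\<one>\<^bsub>A\<^esub>"] ring_hom_one[OF u0] by simp
    finally have "u1 \<one>\<^bsub>A\<^esub> \<oplus>\<^bsub>S\<^esub> u1 \<one>\<^bsub>A\<^esub> = u1 \<one>\<^bsub>A\<^esub> \<oplus>\<^bsub>S\<^esub> \<zero>\<^bsub>S\<^esub>"
      using u1c[of "\<one>\<^bsub>A\<^esub>"] by simp
    then show ?thesis using u1c[of "\<one>\<^bsub>A\<^esub>"] by simp
  qed
  show ?thesis
  proof (rule ring_hom_memI)
    fix x assume "x \<in> carrier A"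
    then show "monom (UP S) (u0 x) 0 \<oplus>\<^bsub>UP S\<^esub> monom (UP S) (u1 x) 1 \<in> carrier (UP S)"
      using u0c u1c by simp
  next
    show "monom (UP S) (u0 \<one>\<^bsub>A\<^esub>) 0 \<oplus>\<^bsub>UP S\<^esub> monom (UP S) (u1 \<one>\<^bsub>A\<^esub>) 1 = \<one>\<^bsub>UP S\<^esub>"
      using u1one ring_hom_one[OF u0] by (simp add: U.monom_one)
  next
    fix x y assume x: "x \<in> carrier A" and y: "y \<in> carrier A"
    have c: "u0 x \<in> carrier S" "u0 y \<in> carrier S" "u1 x \<in> carrier S" "u1 y \<in> carrier S"
      using x y u0c u1c by auto
    show "monom (UP S) (u0 (x \<oplus>\<^bsub>A\<^esub> y)) 0 \<oplus>\<^bsub>UP S\<^esub> monom (UP S) (u1 (x \<oplus>\<^bsub>A\<^esub> y)) 1 =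
      (monom (UP S) (u0 x) 0 \<oplus>\<^bsub>UP S\<^esub> monom (UP S) (u1 x) 1) \<oplus>\<^bsub>UP S\<^esub> (monom (UP S) (u0 y) 0 \<oplus>\<^bsub>UP S\<^esub> monom (UP S) (u1 y) 1)"
    proof -
      have "monom (UP S) (u0 (x \<oplus>\<^bsub>A\<^esub> y)) 0 \<oplus>\<^bsub>UP S\<^esub> monom (UP S) (u1 (x \<oplus>\<^bsub>A\<^esub> y)) 1
        = (monom (UP S) (u0 x) 0 \<oplus>\<^bsub>UP S\<^esub> monom (UP S) (u0 y) 0) \<oplus>\<^bsub>UP S\<^esub> (monom (UP S) (u1 x) 1 \<oplus>\<^bsub>UP S\<^esub> monom (UP S) (u1 y) 1)"
        using x y c by (simp only: ring_hom_add[OF u0] u1_add U.monom_add)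
      also have "\<dots> = (monom (UP S) (u0 x) 0 \<oplus>\<^bsub>UP S\<^esub> monom (UP S) (u1 x) 1) \<oplus>\<^bsub>UP S\<^esub> (monom (UP S) (u0 y) 0 \<oplus>\<^bsub>UP S\<^esub> monom (UP S) (u1 y) 1)"
        using c by (simp add: U.P.a_ac)
      finally show ?thesis .
    qed
  next
    fix x y assume x: "x \<in> carrier A" and y: "y \<in> carrier A"
    have c: "u0 x \<in> carrier S" "u0 y \<in> carrier S" "u1 x \<in> carrier S" "u1 y \<in> carrier S"
      using x y u0c u1c by auto
    let ?p0 = "monom (UP S) (u0 x) 0" and ?p1 = "monom (UP S) (u1 x) 1"
      and ?q0 = "monom (UP S) (u0 y) 0" and ?q1 = "monom (UP S) (u1 y) 1"
    have pc: "?p0 \<in> carrier (UP S)" "?p1 \<in> carrier (UP S)" "?q0 \<in> carrier (UP S)" "?q1 \<in> carrier (UP S)"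
      using c by auto
    have e00: "?p0 \<otimes>\<^bsub>UP S\<^esub> ?q0 = monom (UP S) (u0 x \<otimes>\<^bsub>S\<^esub> u0 y) 0"
      using U.monom_mult[OF c(1) c(2), of 0 0] by simp
    have e01: "?p0 \<otimes>\<^bsub>UP S\<^esub> ?q1 = monom (UP S) (u0 x \<otimes>\<^bsub>S\<^esub> u1 y) 1"
      using U.monom_mult[OF c(1) c(4), of 0 1] by simp
    have e10: "?p1 \<otimes>\<^bsub>UP S\<^esub> ?q0 = monom (UP S) (u0 y \<otimes>\<^bsub>S\<^esub> u1 x) 1"
      using U.monom_mult[OF c(3) c(2), of 1 0] c by (simp add: S.m_comm)
    have e11: "?p1 \<otimes>\<^bsub>UP S\<^esub> ?q1 = \<zero>\<^bsub>UP S\<^esub>"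
      using U.monom_mult[OF c(3) c(4), of 1 1] u1_sq[OF x y] by simp
    have "(?p0 \<oplus>\<^bsub>UP S\<^esub> ?p1) \<otimes>\<^bsub>UP S\<^esub> (?q0 \<oplus>\<^bsub>UP S\<^esub> ?q1) =
        (?p0 \<otimes>\<^bsub>UP S\<^esub> ?q0 \<oplus>\<^bsub>UP S\<^esub> ?p0 \<otimes>\<^bsub>UP S\<^esub> ?q1) \<oplus>\<^bsub>UP S\<^esub> (?p1 \<otimes>\<^bsub>UP S\<^esub> ?q0 \<oplus>\<^bsub>UP S\<^esub> ?p1 \<otimes>\<^bsub>UP S\<^esub> ?q1)"
      using pc by (simp add: U.P.l_distr U.P.r_distr U.P.a_ac)
    also have "\<dots> = monom (UP S) (u0 x \<otimes>\<^bsub>S\<^esub> u0 y) 0 \<oplus>\<^bsub>UP S\<^esub>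
        (monom (UP S) (u0 x \<otimes>\<^bsub>S\<^esub> u1 y) 1 \<oplus>\<^bsub>UP S\<^esub> monom (UP S) (u0 y \<otimes>\<^bsub>S\<^esub> u1 x) 1)"
      unfolding e00 e01 e10 e11 using c by (simp add: U.P.a_assoc)
    also have "\<dots> = monom (UP S) (u0 (x \<otimes>\<^bsub>A\<^esub> y)) 0 \<oplus>\<^bsub>UP S\<^esub> monom (UP S) (u1 (x \<otimes>\<^bsub>A\<^esub> y)) 1"
      using c x y by (simp add: ring_hom_mult[OF u0] u1_mult U.monom_add)
    finally show "monom (UP S) (u0 (x \<otimes>\<^bsub>A\<^esub> y)) 0 \<oplus>\<^bsub>UP S\<^esub> monom (UP S) (u1 (x \<otimes>\<^bsub>A\<^esub> y)) 1 =
      (?p0 \<oplus>\<^bsub>UP S\<^esub> ?p1) \<otimes>\<^bsub>UP S\<^esub> (?q0 \<oplus>\<^bsub>UP S\<^esub> ?q1)" by simp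
  qed
qed

context
  fixes F :: "'k ring" and A :: "'a ring" (structure) and eta :: "'k \<Rightarrow> 'a"
  assumes F: "field F" and cz: "char_zero_ring F" and A: "cring A" and eta: "eta \<in> ring_hom F A"
begin

interpretation A: cring A by (rule A)

lemma a_cancel_aux: "w \<in> carrier A \<Longrightarrow> x \<in> carrier A \<Longrightarrow> w \<oplus> (x \<ominus> w) = x"
proof -
  assume w: "w \<in> carrier A" and x: "x \<in> carrier A"
  have "w \<oplus> (x \<ominus> w) = x \<oplus> (w \<oplus> \<ominus> w)" unfolding A.minus_eq using w x by (simp add: A.a_lcomm)
  then show ?thesis using w x by (simp add: A.r_neg)
qed

lemma a_cancel3: "x \<in> carrier A \<Longrightarrow> y \<in> carrier A \<Longrightarrow> z \<in> carrier A \<Longrightarrow> (y \<oplus> z) \<oplus> ((x \<ominus> y) \<ominus> z) = x"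
proof -
  assume x: "x \<in> carrier A" and y: "y \<in> carrier A" and z: "z \<in> carrier A"
  have "(x \<ominus> y) \<ominus> z = x \<ominus> (y \<oplus> z)" using x y z by (simp add: A.minus_eq A.minus_add A.a_assoc)
  then show ?thesis using x y z a_cancel_aux by simp
qed

lemma infinite_A: assumes nz: "\<one> \<noteq> \<zero>" shows "infinite (carrier A)"
proof -
  have inj: "inj (\<lambda>n. nk A n)"
  proof (rule injI)
    have key: "nk A n = nk A (n + k) \<Longrightarrow> k = 0" for n k
    proof (rule ccontr)
      assume e: "nk A n = nk A (n + k)" and k: "k \<noteq> 0"
      then obtain k' where k': "k = Suc k'" by (cases k) auto
      have "nk A n \<oplus> nk A k = nk A n \<oplus> \<zero>" using e A by (simp add: nk_add nk_closed)
      then have "nk A k = \<zero>" using A by (simp add: nk_closed)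
      then have "nk A (Suc k') \<otimes> \<one> = \<zero>" using k' A by (simp add: nk_closed)
      then have "\<one> = \<zero>" using char_cancel[OF F cz A eta, of "\<one>" k'] by simp
      then show False using nz by simp
    qed
    fix n m assume e: "nk A n = nk A m"
    show "n = m"
    proof (cases "n \<le> m")
      case True
      then obtain k where "m = n + k" using le_Suc_ex by blast
      then show ?thesis using key e by simp
    next
      case False
      then obtain k where nk: "n = m + k" using le_Suc_ex[of m n] by auto
      then have "nk A m = nk A (m + k)" using e by simp
      then have "k = 0" by (rule key)
      then show ?thesis using nk by simp
    qed
  qed
  have "range (\<lambda>n. nk A n) \<subseteq> carrier A" using A by (auto simp: nk_closed)
  then show ?thesis using inj by (meson finite_imageD infinite_UNIV_nat infinite_super)
qed

definition enc :: "'a \<times> ('a \<Rightarrow> 'a) \<Rightarrow> 'a \<times> ('a \<times> 'a) set" where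
  "enc p = (fst p, (\<lambda>t. (t, snd p t)) ` {t. snd p t \<noteq> \<zero>})"

lemma enc_inj: "inj_on enc (carrier A \<times> FS A)"
proof (rule inj_onI)
  fix p q assume p: "p \<in> carrier A \<times> FS A" and q: "q \<in> carrier A \<times> FS A" and e: "enc p = enc q"
  have f: "fst p = fst q" using e unfolding enc_def by simp
  have g: "(\<lambda>t. (t, snd p t)) ` {t. snd p t \<noteq> \<zero>} = (\<lambda>t. (t, snd q t)) ` {t. snd q t \<noteq> \<zero>}"
    using e unfolding enc_def by simp
  have "snd p t = snd q t" for t
  proof (cases "snd p t = \<zero>")
    case True
    show ?thesis
    proof (rule ccontr)
      assume ne: "snd p t \<noteq> snd q t"
      then have "(t, snd q t) \<in> (\<lambda>t. (t, snd q t)) ` {t. snd q t \<noteq> \<zero>}" using True by auto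
      then have "(t, snd q t) \<in> (\<lambda>t. (t, snd p t)) ` {t. snd p t \<noteq> \<zero>}" using g by simp
      then show False using ne by auto
    qed
  next
    case False
    then have "(t, snd p t) \<in> (\<lambda>t. (t, snd p t)) ` {t. snd p t \<noteq> \<zero>}" by auto
    then have "(t, snd p t) \<in> (\<lambda>t. (t, snd q t)) ` {t. snd q t \<noteq> \<zero>}" using g by simp
    then show ?thesis by auto
  qed
  then show "p = q" using f by (simp add: prod_eq_iff fun_eq_iff)
qed

lemma enc_into: "enc ` (carrier A \<times> FS A) \<subseteq> carrier A \<times> Fpow (carrier A \<times> carrier A)"
proof
  fix y assume "y \<in> enc ` (carrier A \<times> FS A)"
  then obtain b f where b: "b \<in> carrier A" and f: "f \<in> FS A" and y: "y = enc (b, f)" by auto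
  have fin: "finite {t. f t \<noteq> \<zero>}" and sub: "{t. f t \<noteq> \<zero>} \<subseteq> carrier A" and v: "\<And>t. f t \<in> carrier A"
    using f unfolding FS_def by auto
  have "(\<lambda>t. (t, f t)) ` {t. f t \<noteq> \<zero>} \<in> Fpow (carrier A \<times> carrier A)"
    unfolding Fpow_def using fin sub v by auto
  then show "y \<in> carrier A \<times> Fpow (carrier A \<times> carrier A)" using b y unfolding enc_def by simp
qed

lemma delta_one_rels: "kd_delta A \<one> \<in> kd_rels F A eta"
proof -
  let ?r = "kd_minus A (kd_minus A (kd_delta A (\<one> \<otimes> \<one>)) (kd_smult A \<one> (kd_delta A \<one>))) (kd_smult A \<one> (kd_delta A \<one>))"
  have "?r \<in> kd_gens F A eta" unfolding kd_gens_def by blast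
  then have rr: "?r \<in> kd_rels F A eta" by (rule rels_gen[OF A eta])
  have v: "\<And>t. kd_delta A \<one> t \<in> carrier A" unfolding kd_delta_def by simp
  have "kd_smult A (\<ominus> \<one>) ?r = kd_delta A \<one>"
  proof
    fix t
    have "kd_smult A (\<ominus> \<one>) ?r t = \<ominus> \<one> \<otimes> ((kd_delta A \<one> t \<ominus> kd_delta A \<one> t) \<ominus> kd_delta A \<one> t)"
      unfolding kd_smult_def kd_minus_def using v by simp
    also have "\<dots> = kd_delta A \<one> t" using v[of t] by (simp add: A.minus_eq A.r_neg A.l_minus A.minus_minus)
    finally show "kd_smult A (\<ominus> \<one>) ?r t = kd_delta A \<one> t" .
  qed
  moreover have "kd_smult A (\<ominus> \<one>) ?r \<in> kd_rels F A eta" by (rule rels_smult[OF A eta _ rr]) simp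
  ultimately show ?thesis by simp
qed

lemma delta_eta_rels: assumes l: "l \<in> carrier F" shows "kd_delta A (eta l) \<in> kd_rels F A eta"
proof -
  have el: "eta l \<in> carrier A" using eta l by (rule ring_hom_closed)
  let ?r = "kd_minus A (kd_delta A (eta l \<otimes> \<one>)) (kd_smult A (eta l) (kd_delta A \<one>))"
  have "?r \<in> kd_gens F A eta" unfolding kd_gens_def using l by blast
  then have rr: "?r \<in> kd_rels F A eta" by (rule rels_gen[OF A eta])
  have s: "kd_smult A (eta l) (kd_delta A \<one>) \<in> kd_rels F A eta"
    by (rule rels_smult[OF A eta el delta_one_rels])
  have v: "\<And>t. kd_delta A \<one> t \<in> carrier A" "\<And>t. kd_delta A (eta l) t \<in> carrier A" unfolding kd_delta_def by simp_all
  have "kd_add A ?r (kd_smult A (eta l) (kd_delta A \<one>)) = kd_delta A (eta l)"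
  proof
    fix t
    show "kd_add A ?r (kd_smult A (eta l) (kd_delta A \<one>)) t = kd_delta A (eta l) t"
      unfolding kd_add_def kd_minus_def kd_smult_def using el v
      by (simp add: A.minus_eq A.a_assoc A.l_neg)
  qed
  moreover have "kd_add A ?r (kd_smult A (eta l) (kd_delta A \<one>)) \<in> kd_rels F A eta"
    by (rule rels_add[OF A eta rr s])
  ultimately show ?thesis by simp
qed

end

context
  fixes F :: "'k ring" and A :: "'a ring" (structure) and eta :: "'k \<Rightarrow> 'a"
  assumes F: "field F" and cz: "char_zero_ring F" and A: "cring A" and eta: "eta \<in> ring_hom F A"
begin

interpretation A: cring A by (rule A)

lemma pcu_sub_ker: "Pcu TYPE('a) F A eta \<subseteq> ker_d F A eta"
proof
  fix a assume aP: "a \<in> Pcu TYPE('a) F A eta"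
  then have a: "a \<in> carrier A" and H: "\<And>(C::'a ring) etaC phi. cring C \<Longrightarrow> etaC \<in> ring_hom F C \<Longrightarrow>
      phi \<in> ring_hom A (UP C) \<Longrightarrow> (\<forall>c\<in>carrier F. phi (eta c) = monom (UP C) (etaC c) 0) \<Longrightarrow>
      (\<exists>c\<in>carrier C. phi a = monom (UP C) c 0)"
    unfolding Pcu_def by blast+
  show "a \<in> ker_d F A eta" unfolding ker_d_def
  proof (intro CollectI conjI a)
    show "kd_delta A a \<in> kd_rels F A eta"
    proof (cases "\<one> = \<zero>")
      case True
      have "kd_delta A a = (\<lambda>_. \<zero>)" unfolding kd_delta_def using True by auto
      then show ?thesis by (simp add: kd_rels.kd_rels_zero)
    next
      case nz: False
      define I where "I = II A F eta"
      define Q where "Q = SZ A Quot I"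
      have SZc: "cring (SZ A)" by (rule SZ_cring[OF A])
      interpret SZ: cring "SZ A" by (rule SZc)
      have Iid: "ideal I (SZ A)" unfolding I_def by (rule II_ideal[OF A eta])
      interpret Iid: ideal I "SZ A" by (rule Iid)
      have Qc: "cring Q" unfolding Q_def by (rule ideal.quotient_is_cring[OF Iid SZc])
      interpret Q: cring Q by (rule Qc)
      have l1: "lepoll (carrier Q) (carrier (SZ A))"
        unfolding lepoll_def Q_def using quot_rep_inj[OF Iid] by blast
      have l2: "lepoll (carrier (SZ A)) (carrier A \<times> Fpow (carrier A \<times> carrier A))"
        unfolding lepoll_def SZ_carrier using enc_inj[OF F cz A eta] enc_into[OF F cz A eta] by blast
      have l3: "lepoll (carrier A \<times> Fpow (carrier A \<times> carrier A)) (carrier A)"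
        by (rule infinite_square_Fpow[OF infinite_A[OF F cz A eta nz]])
      have "lepoll (carrier Q) (carrier A)" using lepoll_trans[OF l1 lepoll_trans[OF l2 l3]] .
      then obtain g0 :: "('a \<times> ('a \<Rightarrow> 'a)) set \<Rightarrow> 'a" where g0: "inj_on g0 (carrier Q)"
        unfolding lepoll_def by blast
      define S where "S = transp Q g0"
      have Sc: "cring S" unfolding S_def by (rule transp_cring(1)[OF Qc g0])
      interpret S: cring S by (rule Sc)
      have g0h: "g0 \<in> ring_hom Q S" unfolding S_def by (rule transp_cring(2)[OF Qc g0])
      define pr where "pr = (+>\<^bsub>SZ A\<^esub>) I"
      have prh: "pr \<in> ring_hom (SZ A) Q" unfolding pr_def Q_def by (rule ideal.rcos_ring_hom[OF Iid])
      have zQ: "\<zero>\<^bsub>Q\<^esub> = I" unfolding Q_def by (simp add: FactRing_def)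
      have pr_I: "\<And>i. i \<in> I \<Longrightarrow> pr i = \<zero>\<^bsub>Q\<^esub>" unfolding pr_def zQ by (rule Iid.a_rcos_const)
      have prc: "\<And>x. x \<in> carrier (SZ A) \<Longrightarrow> pr x \<in> carrier Q" using prh by (rule ring_hom_closed)
      have g0c: "\<And>x. x \<in> carrier Q \<Longrightarrow> g0 x \<in> carrier S" using g0h by (rule ring_hom_closed)
      have pr_mod: "pr (x \<oplus>\<^bsub>SZ A\<^esub> i) = pr x" if x: "x \<in> carrier (SZ A)" and i: "i \<in> I" for x i
      proof -
        have ic: "i \<in> carrier (SZ A)" using i Iid.a_subset by blast
        have "pr (x \<oplus>\<^bsub>SZ A\<^esub> i) = pr x \<oplus>\<^bsub>Q\<^esub> pr i" using ring_hom_add[OF prh x ic] .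
        then show ?thesis using pr_I[OF i] prc[OF x] by simp
      qed
      have g0z: "g0 \<zero>\<^bsub>Q\<^esub> = \<zero>\<^bsub>S\<^esub>" unfolding S_def by (simp add: transp_zero)
      have prz: "pr \<zero>\<^bsub>SZ A\<^esub> = \<zero>\<^bsub>Q\<^esub>" using ring_hom_zero[OF prh SZ.ring_axioms Q.ring_axioms] .
      define iota :: "'a \<Rightarrow> 'a \<times> ('a \<Rightarrow> 'a)" where "iota = (\<lambda>b. (b, (\<lambda>_. \<zero>)))"
      have iotah: "iota \<in> ring_hom A (SZ A)"
      proof (rule ring_hom_memI)
        fix x assume "x \<in> carrier A" then show "iota x \<in> carrier (SZ A)"
          unfolding iota_def SZ_carrier using FS_zero[OF A] by simp
      next
        fix x y assume x: "x \<in> carrier A" and y: "y \<in> carrier A"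
        show "iota (x \<otimes> y) = iota x \<otimes>\<^bsub>SZ A\<^esub> iota y"
          unfolding iota_def SZ_mult using x y by (simp add: kd_add_def kd_smult_def)
        show "iota (x \<oplus> y) = iota x \<oplus>\<^bsub>SZ A\<^esub> iota y"
          unfolding iota_def SZ_add using x y by (simp add: kd_add_def)
      next
        show "iota \<one> = \<one>\<^bsub>SZ A\<^esub>" unfolding iota_def SZ_one by simp
      qed
      define eps where "eps = (\<lambda>b. (\<zero>, kd_delta A b))"
      have epsc: "\<And>b. b \<in> carrier A \<Longrightarrow> eps b \<in> carrier (SZ A)"
        unfolding eps_def SZ_carrier using FS_delta[OF A] by simp
      have iotac: "\<And>b. b \<in> carrier A \<Longrightarrow> iota b \<in> carrier (SZ A)" using iotah by (rule ring_hom_closed)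
      have dv: "\<And>b t. kd_delta A b t \<in> carrier A" unfolding kd_delta_def by simp
      have inI: "(\<zero>, r) \<in> I" if "r \<in> kd_rels F A eta" for r
        unfolding I_def II_def[OF A] using that by blast
      define u0 where "u0 = (\<lambda>b. g0 (pr (iota b)))"
      have u0h: "u0 \<in> ring_hom A S"
      proof -
        have "pr \<circ> iota \<in> ring_hom A Q" by (rule ring_hom_trans[OF iotah prh])
        then have "g0 \<circ> (pr \<circ> iota) \<in> ring_hom A S" by (rule ring_hom_trans[OF _ g0h])
        then show ?thesis unfolding u0_def comp_def .
      qed
      define u1 where "u1 = (\<lambda>b. g0 (pr (eps b)))"
      have u1c: "\<And>b. b \<in> carrier A \<Longrightarrow> u1 b \<in> carrier S" unfolding u1_def using g0c prc epsc by blast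
      have u1_add: "u1 (x \<oplus> y) = u1 x \<oplus>\<^bsub>S\<^esub> u1 y" if x: "x \<in> carrier A" and y: "y \<in> carrier A" for x y
      proof -
        let ?r = "kd_minus A (kd_minus A (kd_delta A (x \<oplus> y)) (kd_delta A x)) (kd_delta A y)"
        have "?r \<in> kd_gens F A eta" unfolding kd_gens_def using x y by blast
        then have rI: "(\<zero>, ?r) \<in> I" by (intro inI rels_gen[OF A eta])
        have e: "eps (x \<oplus> y) = (eps x \<oplus>\<^bsub>SZ A\<^esub> eps y) \<oplus>\<^bsub>SZ A\<^esub> (\<zero>, ?r)"
          unfolding eps_def SZ_add
          by (simp add: kd_add_def kd_minus_def fun_eq_iff a_cancel3[OF F cz A eta] dv)
        have "pr (eps (x \<oplus> y)) = pr (eps x \<oplus>\<^bsub>SZ A\<^esub> eps y)"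
          unfolding e using pr_mod[OF _ rI] epsc x y by simp
        also have "\<dots> = pr (eps x) \<oplus>\<^bsub>Q\<^esub> pr (eps y)" by (rule ring_hom_add[OF prh epsc[OF x] epsc[OF y]])
        finally show ?thesis unfolding u1_def using ring_hom_add[OF g0h prc[OF epsc[OF x]] prc[OF epsc[OF y]]] by simp
      qed
      have u1_mult: "u1 (x \<otimes> y) = u0 x \<otimes>\<^bsub>S\<^esub> u1 y \<oplus>\<^bsub>S\<^esub> u0 y \<otimes>\<^bsub>S\<^esub> u1 x"
        if x: "x \<in> carrier A" and y: "y \<in> carrier A" for x y
      proof -
        let ?r = "kd_minus A (kd_minus A (kd_delta A (x \<otimes> y)) (kd_smult A x (kd_delta A y))) (kd_smult A y (kd_delta A x))"
        have "?r \<in> kd_gens F A eta" unfolding kd_gens_def using x y by blast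
        then have rI: "(\<zero>, ?r) \<in> I" by (intro inI rels_gen[OF A eta])
        have e: "eps (x \<otimes> y) = (iota x \<otimes>\<^bsub>SZ A\<^esub> eps y \<oplus>\<^bsub>SZ A\<^esub> iota y \<otimes>\<^bsub>SZ A\<^esub> eps x) \<oplus>\<^bsub>SZ A\<^esub> (\<zero>, ?r)"
          unfolding eps_def iota_def SZ_add SZ_mult using x y
          by (simp add: kd_add_def kd_minus_def kd_smult_def fun_eq_iff a_cancel3[OF F cz A eta] dv)
        have c1: "iota x \<otimes>\<^bsub>SZ A\<^esub> eps y \<in> carrier (SZ A)" "iota y \<otimes>\<^bsub>SZ A\<^esub> eps x \<in> carrier (SZ A)"
          using x y iotac epsc by simp_all
        have "pr (eps (x \<otimes> y)) = pr (iota x \<otimes>\<^bsub>SZ A\<^esub> eps y \<oplus>\<^bsub>SZ A\<^esub> iota y \<otimes>\<^bsub>SZ A\<^esub> eps x)"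
          unfolding e using pr_mod[OF _ rI] c1 by simp
        also have "\<dots> = pr (iota x) \<otimes>\<^bsub>Q\<^esub> pr (eps y) \<oplus>\<^bsub>Q\<^esub> pr (iota y) \<otimes>\<^bsub>Q\<^esub> pr (eps x)"
          using c1 x y iotac epsc by (simp add: ring_hom_add[OF prh] ring_hom_mult[OF prh])
        finally have "pr (eps (x \<otimes> y)) = pr (iota x) \<otimes>\<^bsub>Q\<^esub> pr (eps y) \<oplus>\<^bsub>Q\<^esub> pr (iota y) \<otimes>\<^bsub>Q\<^esub> pr (eps x)" .
        then show ?thesis unfolding u1_def u0_def using x y iotac epsc prc
          by (simp add: ring_hom_add[OF g0h] ring_hom_mult[OF g0h])
      qed
      have u1_sq: "u1 x \<otimes>\<^bsub>S\<^esub> u1 y = \<zero>\<^bsub>S\<^esub>" if x: "x \<in> carrier A" and y: "y \<in> carrier A" for x y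
      proof -
        have "eps x \<otimes>\<^bsub>SZ A\<^esub> eps y = \<zero>\<^bsub>SZ A\<^esub>"
          unfolding eps_def SZ_mult SZ_zero by (simp add: kd_add_def kd_smult_def dv)
        then have "pr (eps x) \<otimes>\<^bsub>Q\<^esub> pr (eps y) = \<zero>\<^bsub>Q\<^esub>"
          using ring_hom_mult[OF prh epsc[OF x] epsc[OF y]] prz by simp
        then show ?thesis unfolding u1_def using ring_hom_mult[OF g0h prc[OF epsc[OF x]] prc[OF epsc[OF y]]] g0z by simp
      qed
      define phi where "phi = (\<lambda>b. monom (UP S) (u0 b) 0 \<oplus>\<^bsub>UP S\<^esub> monom (UP S) (u1 b) 1)"
      have phih: "phi \<in> ring_hom A (UP S)" unfolding phi_def
        by (rule dual_hom[OF A Sc u0h u1c u1_add u1_mult u1_sq])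
      define etaC where "etaC = (\<lambda>l. u0 (eta l))"
      have etaCh: "etaC \<in> ring_hom F S"
        using ring_hom_trans[OF eta u0h] unfolding etaC_def comp_def .
      interpret U: UP_cring S "UP S" by unfold_locales simp
      have u0c: "\<And>b. b \<in> carrier A \<Longrightarrow> u0 b \<in> carrier S" using u0h by (rule ring_hom_closed)
      have phieta: "\<forall>c\<in>carrier F. phi (eta c) = monom (UP S) (etaC c) 0"
      proof
        fix l assume l: "l \<in> carrier F"
        have el: "eta l \<in> carrier A" using eta l by (rule ring_hom_closed)
        have "eps (eta l) \<in> I" unfolding eps_def by (rule inI[OF delta_eta_rels[OF F cz A eta l]])
        then have "u1 (eta l) = \<zero>\<^bsub>S\<^esub>" unfolding u1_def using pr_I g0z by simp
        then show "phi (eta l) = monom (UP S) (etaC l) 0"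
          unfolding phi_def etaC_def using u0c[OF el] by simp
      qed
      obtain c where c: "c \<in> carrier S" and pa: "phi a = monom (UP S) c 0"
        using H[OF Sc etaCh phih phieta] by blast
      have "phi a = (\<lambda>i. monom (UP S) (u0 a) 0 i \<oplus>\<^bsub>S\<^esub> monom (UP S) (u1 a) 1 i)"
        unfolding phi_def by (rule addP_eq) (simp_all add: u0c[OF a] u1c[OF a])
      then have "phi a 1 = monom (UP S) (u0 a) 0 1 \<oplus>\<^bsub>S\<^esub> monom (UP S) (u1 a) 1 1" by simp
      then have "phi a 1 = u1 a" using u0c[OF a] u1c[OF a] by (simp add: monom_eq)
      moreover have "phi a 1 = \<zero>\<^bsub>S\<^esub>" unfolding pa using c by (simp add: monom_eq)
      ultimately have "g0 (pr (eps a)) = g0 \<zero>\<^bsub>Q\<^esub>" unfolding u1_def using g0z by simp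
      then have "pr (eps a) = \<zero>\<^bsub>Q\<^esub>" using g0 prc[OF epsc[OF a]] Q.zero_closed by (meson inj_onD)
      then have "eps a \<in> I" unfolding pr_def zQ by (rule Iid.rcos_const_imp_mem[OF epsc[OF a]])
      then show ?thesis unfolding I_def II_def[OF A] eps_def by auto
    qed
  qed
qed

end

theorem mainTheorem13:
  fixes F :: "'k ring" and A :: "'a ring" and eta :: "'k \<Rightarrow> 'a"
  assumes "field F" and "char_zero_ring F"
    and "cring A" and "eta \<in> ring_hom F A"
  shows "Pcu TYPE('a) F A eta = ker_d F A eta
         \<and> ker_d F A eta = deRham_H0 F A eta
         \<and> ker_d F A eta \<subseteq> Pcu TYPE('c) F A eta"
proof (intro conjI)
  have "ker_d F A eta \<subseteq> Pcu TYPE('a) F A eta" by (rule ker_sub_Pcu[OF assms])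
  then show "Pcu TYPE('a) F A eta = ker_d F A eta" using pcu_sub_ker[OF assms] by blast
  show "ker_d F A eta = deRham_H0 F A eta" by (simp add: deRham_H0_def)
  show "ker_d F A eta \<subseteq> Pcu TYPE('c) F A eta" by (rule ker_sub_Pcu[OF assms])
qed

end
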